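(* Let $\psi,\varphi\in\mathcal S'(\mathbb R^d)$ with $\varphi$ compactly supported. (i) If $\psi$ is weakly almost periodic then so is $\psi*\varphi$. (ii) If $\psi$ is strongly almost periodic then so is $\psi*\varphi$. (iii) If $\psi$ is null weakly almost periodic then so is $\psi*\varphi$.
   Context: For $\psi\in\mathcal S'$ and $f\in\mathcal S$, $\psi*f(t)=\psi(T_tf_-)$, $f_-(s)=f(-s)$, $T_tf(x)=f(x-t)$. A tempered distribution $\psi$ is weakly / strongly / null weakly almost periodic if $\psi*f$ is a weakly almost periodic / Bohr almost periodic / null weakly almost periodic function for every $f\in\mathcal S$. *)

theory Defs
  imports "HOL-Analysis.Analysis"
begin

text \<open>Ambient space: R^d is modelled by an arbitrary Euclidean space 'a (DIM('a) = d).
  Functions and distributions are complex valued.\<close>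

definition dir_deriv :: "'a::euclidean_space \<Rightarrow> ('a \<Rightarrow> complex) \<Rightarrow> 'a \<Rightarrow> complex" where
  "dir_deriv v f x = vector_derivative (\<lambda>t::real. f (x + t *\<^sub>R v)) (at 0)"

fun iter_deriv :: "'a::euclidean_space list \<Rightarrow> ('a \<Rightarrow> complex) \<Rightarrow> 'a \<Rightarrow> complex" where
  "iter_deriv [] f = f"
| "iter_deriv (v # vs) f = dir_deriv v (iter_deriv vs f)"

definition smooth_fun :: "('a::euclidean_space \<Rightarrow> complex) \<Rightarrow> bool" where
  "smooth_fun f \<longleftrightarrow>
     (\<forall>vs. set vs \<subseteq> Basis \<longrightarrow> continuous_on UNIV (iter_deriv vs f) \<and>
        (\<forall>v\<in>Basis. \<forall>x. (\<lambda>t::real. iter_deriv vs f (x + t *\<^sub>R v)) differentiable (at 0)))"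

definition schwartz :: "('a::euclidean_space \<Rightarrow> complex) \<Rightarrow> bool" where
  "schwartz f \<longleftrightarrow> smooth_fun f \<and>
     (\<forall>vs. set vs \<subseteq> Basis \<longrightarrow> (\<forall>n::nat. \<exists>C. \<forall>x. (1 + norm x) ^ n * norm (iter_deriv vs f x) \<le> C))"

definition schwartz_seminorm :: "nat \<Rightarrow> 'a::euclidean_space list \<Rightarrow> ('a \<Rightarrow> complex) \<Rightarrow> real" where
  "schwartz_seminorm n vs f = (SUP x. (1 + norm x) ^ n * norm (iter_deriv vs f x))"

text \<open>Only its values on Schwartz
  functions are relevant.\<close>
definition tempered :: "(('a::euclidean_space \<Rightarrow> complex) \<Rightarrow> complex) \<Rightarrow> bool" where
  "tempered T \<longleftrightarrow>
     (\<forall>f g. schwartz f \<longrightarrow> schwartz g \<longrightarrow> T (\<lambda>x. f x + g x) = T f + T g) \<and>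
     (\<forall>f c. schwartz f \<longrightarrow> T (\<lambda>x. c * f x) = c * T f) \<and>
     (\<exists>C N. \<forall>f. schwartz f \<longrightarrow>
        norm (T f) \<le> C * (\<Sum>(n, vs) \<in> {..N} \<times> {vs. set vs \<subseteq> Basis \<and> length vs \<le> N}.
                              schwartz_seminorm n vs f))"

definition dist_support :: "(('a::euclidean_space \<Rightarrow> complex) \<Rightarrow> complex) \<Rightarrow> 'a set" where
  "dist_support T = - \<Union>{U. open U \<and>
     (\<forall>f. schwartz f \<and> compact (closure {x. f x \<noteq> 0}) \<and> closure {x. f x \<noteq> 0} \<subseteq> U \<longrightarrow> T f = 0)}"

definition compactly_supported :: "(('a::euclidean_space \<Rightarrow> complex) \<Rightarrow> complex) \<Rightarrow> bool" where
  "compactly_supported T \<longleftrightarrow> compact (dist_support T)"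

definition dconv_fun :: "(('a::euclidean_space \<Rightarrow> complex) \<Rightarrow> complex) \<Rightarrow> ('a \<Rightarrow> complex) \<Rightarrow> 'a \<Rightarrow> complex" where
  "dconv_fun \<psi> f t = \<psi> (\<lambda>x. (\<lambda>s. f (- s)) (x - t))"

definition dconv :: "(('a::euclidean_space \<Rightarrow> complex) \<Rightarrow> complex) \<Rightarrow> (('a \<Rightarrow> complex) \<Rightarrow> complex)
                      \<Rightarrow> ('a \<Rightarrow> complex) \<Rightarrow> complex" where
  "dconv \<psi> \<phi> f = \<psi> (\<lambda>x. \<phi> (\<lambda>y. f (x + y)))"

definition bohr_ap :: "('a::euclidean_space \<Rightarrow> complex) \<Rightarrow> bool" where
  "bohr_ap f \<longleftrightarrow> continuous_on UNIV f \<and>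
     (\<forall>\<epsilon>>0. \<exists>R>0. \<forall>x. \<exists>t\<in>ball x R. \<forall>y. norm (f (y + t) - f y) < \<epsilon>)"

definition weak_topology :: "'v::real_normed_vector topology" where
  "weak_topology = pullback_topology UNIV (\<lambda>x (L::'v \<Rightarrow>\<^sub>L real). blinfun_apply L x) (powertop_real UNIV)"

definition translate_bcf :: "'a::euclidean_space \<Rightarrow> ('a \<Rightarrow> complex) \<Rightarrow> ('a \<Rightarrow>\<^sub>C complex)" where
  "translate_bcf t f = Bcontfun (\<lambda>x. f (x - t))"

definition wap :: "('a::euclidean_space \<Rightarrow> complex) \<Rightarrow> bool" where
  "wap f \<longleftrightarrow> f \<in> bcontfun \<and>
     compactin weak_topology (weak_topology closure_of (range (\<lambda>t. translate_bcf t f)))"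

definition null_wap :: "('a::euclidean_space \<Rightarrow> complex) \<Rightarrow> bool" where
  "null_wap f \<longleftrightarrow> wap f \<and>
     (\<forall>\<epsilon>>0. \<exists>R0. \<forall>R\<ge>R0. \<forall>t.
        integral (cball t R) (\<lambda>x. norm (f x)) / measure lebesgue (cball (0::'a) R) < \<epsilon>)"

definition weakly_ap_dist :: "(('a::euclidean_space \<Rightarrow> complex) \<Rightarrow> complex) \<Rightarrow> bool" where
  "weakly_ap_dist \<psi> \<longleftrightarrow> tempered \<psi> \<and> (\<forall>f. schwartz f \<longrightarrow> wap (dconv_fun \<psi> f))"

definition strongly_ap_dist :: "(('a::euclidean_space \<Rightarrow> complex) \<Rightarrow> complex) \<Rightarrow> bool" where
  "strongly_ap_dist \<psi> \<longleftrightarrow> tempered \<psi> \<and> (\<forall>f. schwartz f \<longrightarrow> bohr_ap (dconv_fun \<psi> f))"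

definition null_weakly_ap_dist :: "(('a::euclidean_space \<Rightarrow> complex) \<Rightarrow> complex) \<Rightarrow> bool" where
  "null_weakly_ap_dist \<psi> \<longleftrightarrow> tempered \<psi> \<and> (\<forall>f. schwartz f \<longrightarrow> null_wap (dconv_fun \<psi> f))"

end

theory Submission
  imports Defs
begin


abbreviation HVD :: "('a::euclidean_space \<Rightarrow> complex) \<Rightarrow> 'a \<Rightarrow> 'a \<Rightarrow> complex \<Rightarrow> bool" where
  "HVD f v x d \<equiv> ((\<lambda>t::real. f (x + t *\<^sub>R v)) has_vector_derivative d) (at 0)"

lemma iter_deriv_append: "iter_deriv (vs @ ws) f = iter_deriv vs (iter_deriv ws f)"
  by (induction vs) auto

lemma dir_deriv_eq: "HVD f v x d \<Longrightarrow> dir_deriv v f x = d"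
  unfolding dir_deriv_def by (rule vector_derivative_at)

lemma smooth_HVD:
  assumes "smooth_fun f" "set vs \<subseteq> Basis" "v \<in> Basis"
  shows "HVD (iter_deriv vs f) v x (iter_deriv (v#vs) f x)"
proof -
  have "(\<lambda>t::real. iter_deriv vs f (x + t *\<^sub>R v)) differentiable (at 0)"
    using assms unfolding smooth_fun_def by blast
  then show ?thesis
    by (simp add: dir_deriv_def vector_derivative_works)
qed

lemma smooth_cont: "smooth_fun f \<Longrightarrow> set vs \<subseteq> Basis \<Longrightarrow> continuous_on UNIV (iter_deriv vs f)"
  unfolding smooth_fun_def by blast

lemma smooth_intro:
  assumes "\<And>vs. set vs \<subseteq> Basis \<Longrightarrow> continuous_on UNIV (iter_deriv vs f)"
    and "\<And>vs v x. set vs \<subseteq> Basis \<Longrightarrow> v \<in> Basis \<Longrightarrow> \<exists>d. HVD (iter_deriv vs f) v x d"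
  shows "smooth_fun f"
  unfolding smooth_fun_def
  using assms differentiableI_vector by blast

lemma smooth_iter: "smooth_fun f \<Longrightarrow> set ws \<subseteq> Basis \<Longrightarrow> smooth_fun (iter_deriv ws f)"
  unfolding smooth_fun_def by (simp add: iter_deriv_append[symmetric])

lemma iter_deriv_lin:
  assumes "smooth_fun f" "smooth_fun g" "set vs \<subseteq> Basis"
  shows "iter_deriv vs (\<lambda>x. a * f x + b * g x) = (\<lambda>x. a * iter_deriv vs f x + b * iter_deriv vs g x)"
  using assms(3)
proof (induction vs)
  case Nil
  then show ?case by simp
next
  case (Cons v vs)
  then have v: "v \<in> Basis" and vs: "set vs \<subseteq> Basis" by auto
  show ?case
  proof
    fix x
    have "HVD (\<lambda>x. a * iter_deriv vs f x + b * iter_deriv vs g x) v x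
            (a * iter_deriv (v#vs) f x + b * iter_deriv (v#vs) g x)"
      by (intro has_vector_derivative_add has_vector_derivative_mult_right
          smooth_HVD assms v vs)
    then show "iter_deriv (v # vs) (\<lambda>x. a * f x + b * g x) x =
         a * iter_deriv (v # vs) f x + b * iter_deriv (v # vs) g x"
      using Cons.IH[OF vs] by (simp add: dir_deriv_eq)
  qed
qed

lemma smooth_lin:
  assumes "smooth_fun f" "smooth_fun g"
  shows "smooth_fun (\<lambda>x. a * f x + b * g x)"
proof (rule smooth_intro)
  fix vs :: "'a list" assume vs: "set vs \<subseteq> Basis"
  show "continuous_on UNIV (iter_deriv vs (\<lambda>x. a * f x + b * g x))"
    unfolding iter_deriv_lin[OF assms vs]
    by (intro continuous_intros smooth_cont assms vs)
next
  fix vs :: "'a list" and v :: 'a and x assume vs: "set vs \<subseteq> Basis" and v: "v \<in> Basis"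
  show "\<exists>d. HVD (iter_deriv vs (\<lambda>x. a * f x + b * g x)) v x d"
    unfolding iter_deriv_lin[OF assms vs]
    by (intro exI[of _ "a * iter_deriv (v#vs) f x + b * iter_deriv (v#vs) g x"] has_vector_derivative_add has_vector_derivative_mult_right
          smooth_HVD assms v vs)
qed

lemma dir_deriv_const: "dir_deriv v (\<lambda>x. c) = (\<lambda>x. 0)"
  by (auto simp: dir_deriv_def intro!: ext vector_derivative_at)

lemma iter_deriv_const: "vs \<noteq> [] \<Longrightarrow> iter_deriv vs (\<lambda>x. c) = (\<lambda>x. 0)"
proof (induction vs)
  case Nil
  then show ?case by simp
next
  case (Cons w vs)
  then show ?case by (cases vs) (auto simp: dir_deriv_const)
qed

lemma smooth_const: "smooth_fun (\<lambda>x. c)"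
  apply (rule smooth_intro)
  subgoal for vs by (cases "vs = []") (auto simp: iter_deriv_const)
  subgoal for vs v x by (cases "vs = []") (auto simp: iter_deriv_const intro!: exI[of _ 0])
  done

lemma smooth_add: "smooth_fun f \<Longrightarrow> smooth_fun g \<Longrightarrow> smooth_fun (\<lambda>x. f x + g x)"
  using smooth_lin[of f g 1 1] by simp
lemma smooth_diff: "smooth_fun f \<Longrightarrow> smooth_fun g \<Longrightarrow> smooth_fun (\<lambda>x. f x - g x)"
  using smooth_lin[of f g 1 "-1"] by simp
lemma smooth_cmult: "smooth_fun f \<Longrightarrow> smooth_fun (\<lambda>x. c * f x)"
  using smooth_lin[of f f c 0] by simp
lemma iter_deriv_add: "smooth_fun f \<Longrightarrow> smooth_fun g \<Longrightarrow> set vs \<subseteq> Basis \<Longrightarrow>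
   iter_deriv vs (\<lambda>x. f x + g x) = (\<lambda>x. iter_deriv vs f x + iter_deriv vs g x)"
  using iter_deriv_lin[of f g vs 1 1] by simp
lemma iter_deriv_diff: "smooth_fun f \<Longrightarrow> smooth_fun g \<Longrightarrow> set vs \<subseteq> Basis \<Longrightarrow>
   iter_deriv vs (\<lambda>x. f x - g x) = (\<lambda>x. iter_deriv vs f x - iter_deriv vs g x)"
  using iter_deriv_lin[of f g vs 1 "-1"] by simp
lemma iter_deriv_cmult: "smooth_fun f \<Longrightarrow> set vs \<subseteq> Basis \<Longrightarrow>
   iter_deriv vs (\<lambda>x. c * f x) = (\<lambda>x. c * iter_deriv vs f x)"
  using iter_deriv_lin[of f f vs c 0] by simp

lemma iter_deriv_translate:
  "iter_deriv vs (\<lambda>y. f (a + y)) = (\<lambda>y. iter_deriv vs f (a + y))"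
proof (induction vs)
  case Nil
  then show ?case by simp
next
  case (Cons v vs)
  then show ?case by (simp add: dir_deriv_def add.assoc)
qed

lemma smooth_translate: "smooth_fun f \<Longrightarrow> smooth_fun (\<lambda>y. f (a + y))"
proof (rule smooth_intro)
  fix vs :: "'a list" assume f: "smooth_fun f" and vs: "set vs \<subseteq> Basis"
  have "continuous_on UNIV (iter_deriv vs f \<circ> (\<lambda>y. a + y))"
    by (intro continuous_on_compose continuous_intros continuous_on_subset[OF smooth_cont[OF f vs]]) auto
  then show "continuous_on UNIV (iter_deriv vs (\<lambda>y. f (a + y)))"
    by (simp add: iter_deriv_translate o_def)
next
  fix vs :: "'a list" and v :: 'a and x
  assume f: "smooth_fun f" and vs: "set vs \<subseteq> Basis" and v: "v \<in> Basis"
  have "HVD (iter_deriv vs f) v (a + x) (iter_deriv (v#vs) f (a + x))"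
    by (rule smooth_HVD[OF f vs v])
  then show "\<exists>d. HVD (iter_deriv vs (\<lambda>y. f (a + y))) v x d"
    by (auto simp: iter_deriv_translate add.assoc)
qed

lemma iter_deriv_scale:
  assumes "smooth_fun f" "set vs \<subseteq> Basis"
  shows "iter_deriv vs (\<lambda>y. f (a + s *\<^sub>R y)) = (\<lambda>y. (s ^ length vs) *\<^sub>R iter_deriv vs f (a + s *\<^sub>R y))"
  using assms(2)
proof (induction vs)
  case Nil
  then show ?case by simp
next
  case (Cons v vs)
  then have v: "v \<in> Basis" and vs: "set vs \<subseteq> Basis" by auto
  show ?case
  proof
    fix y
    have d: "HVD (iter_deriv vs f) v (a + s *\<^sub>R y) (iter_deriv (v#vs) f (a + s *\<^sub>R y))"
      by (rule smooth_HVD[OF assms(1) vs v])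
    have "((\<lambda>t. iter_deriv vs f ((a + s *\<^sub>R y) + t *\<^sub>R v)) \<circ> (\<lambda>t. s * t) has_vector_derivative
           s *\<^sub>R iter_deriv (v#vs) f (a + s *\<^sub>R y)) (at 0)"
      apply (rule vector_diff_chain_at)
       apply (simp add: has_real_derivative_iff_has_vector_derivative[symmetric] DERIV_cmult_Id)
      using d by simp
    then have "HVD (iter_deriv vs f) v (a + s *\<^sub>R y) (iter_deriv (v#vs) f (a + s *\<^sub>R y)) \<Longrightarrow> 
          HVD (\<lambda>y. iter_deriv vs f (a + s *\<^sub>R y)) v y
          (s *\<^sub>R iter_deriv (v#vs) f (a + s *\<^sub>R y))"
      by (simp add: o_def algebra_simps)
    then have "HVD (\<lambda>y. (s ^ length vs) *\<^sub>R iter_deriv vs f (a + s *\<^sub>R y)) v y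
          ((s ^ length vs) *\<^sub>R (s *\<^sub>R iter_deriv (v#vs) f (a + s *\<^sub>R y)))"
      using d by (intro bounded_linear.has_vector_derivative[OF bounded_linear_scaleR_right])
    then show "iter_deriv (v # vs) (\<lambda>y. f (a + s *\<^sub>R y)) y =
         (s ^ length (v # vs)) *\<^sub>R iter_deriv (v # vs) f (a + s *\<^sub>R y)"
      using Cons.IH[OF vs] by (simp add: dir_deriv_eq)
  qed
qed

lemma iter_deriv_local:
  assumes "open W" "\<And>x. x \<in> W \<Longrightarrow> f x = g x" "x \<in> W"
  shows "iter_deriv vs f x = iter_deriv vs g x"
  using assms(3)
proof (induction vs arbitrary: x)
  case Nil
  then show ?case using assms by simp
next
  case (Cons v vs)
  have op: "open ((\<lambda>t::real. x + t *\<^sub>R v) -` W)"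
    by (intro open_vimage assms continuous_intros)
  have "eventually (\<lambda>t::real. t \<in> UNIV \<longrightarrow> iter_deriv vs f (x + t *\<^sub>R v) = iter_deriv vs g (x + t *\<^sub>R v)) (nhds 0)"
    using op Cons by (auto simp: eventually_nhds intro!: exI[of _ "(\<lambda>t::real. x + t *\<^sub>R v) -` W"])
  then show ?case
    by (simp add: dir_deriv_def vector_derivative_cong_eq)
qed



lemma HVD_shift:
  assumes "HVD f v (z + r *\<^sub>R v) d"
  shows "((\<lambda>s. f (z + s *\<^sub>R v)) has_vector_derivative d) (at r)"
proof -
  have "((\<lambda>t. f ((z + r *\<^sub>R v) + t *\<^sub>R v)) \<circ> (\<lambda>s. s - r) has_vector_derivative 1 *\<^sub>R d) (at r)"
    apply (rule vector_diff_chain_at)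
     apply (rule has_vector_derivative_diff[where f'=1 and g'=0, simplified])
      apply (rule has_vector_derivative_id)
     apply (rule has_vector_derivative_const)
    using assms by simp
  moreover have "(\<lambda>t. f ((z + r *\<^sub>R v) + t *\<^sub>R v)) \<circ> (\<lambda>s. s - r) = (\<lambda>s. f (z + s *\<^sub>R v))"
    by (auto simp: o_def algebra_simps)
  ultimately show ?thesis by simp
qed

lemma smooth_line_deriv:
  assumes "smooth_fun f" "set vs \<subseteq> Basis" "v \<in> Basis"
  shows "((\<lambda>s. iter_deriv vs f (z + s *\<^sub>R v)) has_vector_derivative iter_deriv (v#vs) f (z + r *\<^sub>R v)) (at r)"
  by (rule HVD_shift, rule smooth_HVD[OF assms])

lemma smooth_line_integral:
  assumes "smooth_fun f" "set vs \<subseteq> Basis" "v \<in> Basis" "p \<le> q"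
  shows "iter_deriv vs f (z + q *\<^sub>R v) - iter_deriv vs f (z + p *\<^sub>R v) =
         integral {p..q} (\<lambda>r. iter_deriv (v#vs) f (z + r *\<^sub>R v))"
proof -
  have "((\<lambda>r. iter_deriv (v#vs) f (z + r *\<^sub>R v)) has_integral
          (iter_deriv vs f (z + q *\<^sub>R v) - iter_deriv vs f (z + p *\<^sub>R v))) {p..q}"
    apply (rule fundamental_theorem_of_calculus[OF assms(4), of "\<lambda>s. iter_deriv vs f (z + s *\<^sub>R v)"])
    using smooth_line_deriv[OF assms(1-3)] has_vector_derivative_at_within by blast
  then show ?thesis by (simp add: integral_unique)
qed

lemma cont_line:
  fixes c a :: "'a::real_normed_vector"
  assumes "continuous_on UNIV g"
  shows "continuous_on S (\<lambda>r::real. g (c + r *\<^sub>R a))"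
proof -
  have 1: "continuous_on S (\<lambda>r::real. c + r *\<^sub>R a)" by (intro continuous_intros)
  have 2: "continuous_on ((\<lambda>r::real. c + r *\<^sub>R a) ` S) g" by (rule continuous_on_subset[OF assms]) simp
  show ?thesis using continuous_on_compose[OF 1 2] by (simp add: o_def)
qed

lemma cont_plane:
  fixes c a b :: "'a::real_normed_vector"
  assumes "continuous_on UNIV g"
  shows "continuous_on S (\<lambda>(h::real, r::real). g (c + h *\<^sub>R b + r *\<^sub>R a))"
proof -
  have 1: "continuous_on S (\<lambda>p::real\<times>real. c + fst p *\<^sub>R b + snd p *\<^sub>R a)" by (intro continuous_intros)
  have 2: "continuous_on ((\<lambda>p::real\<times>real. c + fst p *\<^sub>R b + snd p *\<^sub>R a) ` S) g" by (rule continuous_on_subset[OF assms]) simp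
  show ?thesis using continuous_on_compose[OF 1 2] by (simp add: o_def case_prod_beta)
qed

lemma clairaut:
  assumes u: "smooth_fun u" and a: "a \<in> Basis" and b: "b \<in> Basis"
  shows "iter_deriv [a, b] u = iter_deriv [b, a] u"
proof
  fix x
  let ?ub = "iter_deriv [b] u" and ?ua = "iter_deriv [a] u" and ?uab = "iter_deriv [b,a] u"
  have cab: "continuous_on UNIV ?uab" using smooth_cont[OF u, of "[b,a]"] a b by simp
  have key: "?ub (x + t *\<^sub>R a) - ?ub (x + p *\<^sub>R a) = integral {p..t} (\<lambda>r. ?uab (x + r *\<^sub>R a))"
    if pt: "p \<le> t" for p t
  proof -
    define G where "G = (\<lambda>h. u (x + t *\<^sub>R a + h *\<^sub>R b) - u (x + p *\<^sub>R a + h *\<^sub>R b))"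
    define F where "F = (\<lambda>h. integral (cbox p t) (\<lambda>r. ?ua (x + h *\<^sub>R b + r *\<^sub>R a)))"
    have FG: "F = G"
    proof
      fix h
      have "u ((x + h *\<^sub>R b) + t *\<^sub>R a) - u ((x + h *\<^sub>R b) + p *\<^sub>R a) =
            integral {p..t} (\<lambda>r. iter_deriv [a] u ((x + h *\<^sub>R b) + r *\<^sub>R a))"
        using smooth_line_integral[OF u, of "[]" a p t "x + h *\<^sub>R b"] a pt by simp
      then show "F h = G h" unfolding F_def G_def by (simp add: algebra_simps)
    qed
    have dG: "(G has_vector_derivative (?ub (x + t *\<^sub>R a) - ?ub (x + p *\<^sub>R a))) (at 0)"
      unfolding G_def
      using smooth_HVD[OF u, of "[]" b] b
      by (intro has_vector_derivative_diff) auto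
    have dF: "(F has_vector_derivative integral (cbox p t) (\<lambda>r. ?uab (x + 0 *\<^sub>R b + r *\<^sub>R a))) (at 0 within UNIV)"
      unfolding F_def
    proof (rule leibniz_rule_vector_derivative[where fx="\<lambda>h r. ?uab (x + h *\<^sub>R b + r *\<^sub>R a)"])
      fix h :: real and r :: real
      have "((\<lambda>s. ?ua ((x + r *\<^sub>R a) + s *\<^sub>R b)) has_vector_derivative ?uab ((x + r *\<^sub>R a) + h *\<^sub>R b)) (at h)"
        using smooth_line_deriv[OF u, of "[a]" b "x + r *\<^sub>R a" h] a b by simp
      then show "((\<lambda>h. ?ua (x + h *\<^sub>R b + r *\<^sub>R a)) has_vector_derivative ?uab (x + h *\<^sub>R b + r *\<^sub>R a)) (at h within UNIV)"
        by (simp add: algebra_simps)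
    next
      fix h :: real
      have "continuous_on (cbox p t) (\<lambda>r. ?ua (x + h *\<^sub>R b + r *\<^sub>R a))"
        using smooth_cont[OF u, of "[a]"] a
        by (intro cont_line[where c="x + h *\<^sub>R b"]) auto
      then show "(\<lambda>r. ?ua (x + h *\<^sub>R b + r *\<^sub>R a)) integrable_on cbox p t"
        by (rule integrable_continuous)
    next
      show "continuous_on (UNIV \<times> cbox p t) (\<lambda>(h, r). ?uab (x + h *\<^sub>R b + r *\<^sub>R a))"
        by (rule cont_plane[OF cab])
    qed simp_all
    have "?ub (x + t *\<^sub>R a) - ?ub (x + p *\<^sub>R a) = integral (cbox p t) (\<lambda>r. ?uab (x + 0 *\<^sub>R b + r *\<^sub>R a))"
      using vector_derivative_unique_at[OF dG] dF FG by simp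
    then show ?thesis by simp
  qed
  have cline: "continuous_on {-1..1} (\<lambda>r. ?uab (x + r *\<^sub>R a))"
    by (rule cont_line[OF cab])
  have "((\<lambda>t. integral {-1..t} (\<lambda>r. ?uab (x + r *\<^sub>R a))) has_vector_derivative ?uab (x + 0 *\<^sub>R a)) (at 0 within {-1..1})"
    by (rule integral_has_vector_derivative[OF cline]) auto
  then have d1: "((\<lambda>t. integral {-1..t} (\<lambda>r. ?uab (x + r *\<^sub>R a))) has_vector_derivative ?uab x) (at 0)"
    using at_within_interior[of 0 "{-1..1::real}"] by simp
  have d2: "((\<lambda>t. ?ub (x + (-1) *\<^sub>R a) + integral {-1..t} (\<lambda>r. ?uab (x + r *\<^sub>R a))) has_vector_derivative ?uab x) (at 0)"
    using has_vector_derivative_add[OF has_vector_derivative_const d1] by simp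
  have ev: "eventually (\<lambda>t. t \<in> UNIV \<longrightarrow> ?ub (x + (-1) *\<^sub>R a) + integral {-1..t} (\<lambda>r. ?uab (x + r *\<^sub>R a))
                 = ?ub (x + t *\<^sub>R a)) (nhds (0::real))"
  proof -
    have "open {-1<..<1::real}" by simp
    moreover have "(0::real) \<in> {-1<..<1}" by simp
    moreover have "\<forall>t\<in>{-1<..<1::real}. ?ub (x + (-1) *\<^sub>R a) + integral {-1..t} (\<lambda>r. ?uab (x + r *\<^sub>R a))
                 = ?ub (x + t *\<^sub>R a)"
      using key[of "-1"] by (auto simp: algebra_simps)
    ultimately show ?thesis unfolding eventually_nhds by blast
  qed
  have e0: "?ub (x + (-1) *\<^sub>R a) + integral {-1..0} (\<lambda>r. ?uab (x + r *\<^sub>R a)) = ?ub (x + 0 *\<^sub>R a)"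
    using key[of "-1" 0] by (simp add: algebra_simps)
  have "((\<lambda>t. ?ub (x + t *\<^sub>R a)) has_vector_derivative ?uab x) (at 0)"
    using has_vector_derivative_cong_ev[OF ev e0] d2 by simp
  then have "HVD ?ub a x (?uab x)" by simp
  then show "iter_deriv [a, b] u x = iter_deriv [b, a] u x"
    by (simp add: dir_deriv_eq)
qed

lemma iter_deriv_comm:
  assumes "smooth_fun g" "set vs \<subseteq> Basis" "v \<in> Basis"
  shows "iter_deriv (vs @ [v]) g = iter_deriv (v # vs) g"
  using assms(2)
proof (induction vs)
  case Nil
  then show ?case by simp
next
  case (Cons w vs)
  then have w: "w \<in> Basis" and vs: "set vs \<subseteq> Basis" by auto
  have sm: "smooth_fun (iter_deriv vs g)" by (rule smooth_iter[OF assms(1) vs])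
  have "iter_deriv ((w # vs) @ [v]) g = dir_deriv w (iter_deriv (v # vs) g)"
    using Cons.IH[OF vs] by simp
  also have "\<dots> = iter_deriv [w, v] (iter_deriv vs g)" by simp
  also have "\<dots> = iter_deriv [v, w] (iter_deriv vs g)" by (rule clairaut[OF sm w assms(3)])
  finally show ?case by simp
qed



fun leib :: "'a list \<Rightarrow> ('a list \<times> 'a list) list" where
  "leib [] = [([], [])]"
| "leib (v # vs) = concat (map (\<lambda>(a, b). [(v # a, b), (a, v # b)]) (leib vs))"

lemma leib_set': "(a, b) \<in> set (leib vs) \<Longrightarrow> set a \<subseteq> set vs \<and> set b \<subseteq> set vs"
proof (induction vs arbitrary: a b)
  case Nil
  then show ?case by simp
next
  case (Cons v vs)
  then obtain a' b' where ab: "(a', b') \<in> set (leib vs)" and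
     "(a, b) = (v # a', b') \<or> (a, b) = (a', v # b')" by auto
  with Cons.IH[OF ab] show ?case by auto
qed

lemma leib_set: "p \<in> set (leib vs) \<Longrightarrow> set (fst p) \<subseteq> set vs \<and> set (snd p) \<subseteq> set vs"
  using leib_set'[of "fst p" "snd p" vs] by simp

lemma leib_sum: "(\<Sum>p\<leftarrow>concat (map (\<lambda>(a, b). [(v # a, b), (a, v # b)]) L). F p) =
   (\<Sum>p\<leftarrow>L. F (a_of p v) + F (b_of p v))" if "a_of = (\<lambda>p v. (v # fst p, snd p))" "b_of = (\<lambda>p v. (fst p, v # snd p))"
  using that by (induction L) auto

lemma HVD_sum_list:
  assumes "\<And>p. p \<in> set ps \<Longrightarrow> HVD (F p) v x (D p)"
  shows "HVD (\<lambda>y. \<Sum>p\<leftarrow>ps. F p y) v x (\<Sum>p\<leftarrow>ps. D p)"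
  using assms
proof (induction ps)
  case Nil
  then show ?case by simp
next
  case (Cons p ps)
  then show ?case by (simp add: has_vector_derivative_add)
qed

lemma iter_deriv_mult:
  assumes c: "smooth_fun c" and h: "smooth_fun h" and vs: "set vs \<subseteq> Basis"
  shows "iter_deriv vs (\<lambda>x. c x * h x) = (\<lambda>x. \<Sum>p\<leftarrow>leib vs. iter_deriv (fst p) c x * iter_deriv (snd p) h x)"
  using vs
proof (induction vs)
  case Nil
  then show ?case by simp
next
  case (Cons v vs)
  then have v: "v \<in> Basis" and vs: "set vs \<subseteq> Basis" by auto
  show ?case
  proof
    fix x
    have "HVD (\<lambda>y. \<Sum>p\<leftarrow>leib vs. iter_deriv (fst p) c y * iter_deriv (snd p) h y) v x
           (\<Sum>p\<leftarrow>leib vs. iter_deriv (fst p) c x * iter_deriv (v#snd p) h x + iter_deriv (v#fst p) c x * iter_deriv (snd p) h x)"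
    proof (rule HVD_sum_list[where F="\<lambda>p y. iter_deriv (fst p) c y * iter_deriv (snd p) h y"])
      fix p assume p: "p \<in> set (leib vs)"
      then have a: "set (fst p) \<subseteq> Basis" and b: "set (snd p) \<subseteq> Basis" using leib_set vs by blast+
      show "HVD (\<lambda>y. iter_deriv (fst p) c y * iter_deriv (snd p) h y) v x
         (iter_deriv (fst p) c x * iter_deriv (v # snd p) h x + iter_deriv (v # fst p) c x * iter_deriv (snd p) h x)"
        using has_vector_derivative_mult[OF smooth_HVD[OF c a v] smooth_HVD[OF h b v]] by simp
    qed
    moreover have "(\<Sum>p\<leftarrow>leib vs. iter_deriv (fst p) c x * iter_deriv (v#snd p) h x + iter_deriv (v#fst p) c x * iter_deriv (snd p) h x)
        = (\<Sum>p\<leftarrow>leib (v#vs). iter_deriv (fst p) c x * iter_deriv (snd p) h x)"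
      by (simp add: leib_sum[OF refl refl] add.commute)
    ultimately show "iter_deriv (v # vs) (\<lambda>x. c x * h x) x = (\<Sum>p\<leftarrow>leib (v#vs). iter_deriv (fst p) c x * iter_deriv (snd p) h x)"
      using Cons.IH[OF vs] by (simp add: dir_deriv_eq del: leib.simps)
  qed
qed

lemma cont_sum_list: "(\<And>p. p \<in> set ps \<Longrightarrow> continuous_on S (F p)) \<Longrightarrow> continuous_on S (\<lambda>x. \<Sum>p\<leftarrow>ps. F p x :: complex)"
  by (induction ps) (auto intro!: continuous_intros)

lemma smooth_mult:
  assumes c: "smooth_fun c" and h: "smooth_fun h"
  shows "smooth_fun (\<lambda>x. c x * h x)"
proof (rule smooth_intro)
  fix vs :: "'a list" assume vs: "set vs \<subseteq> Basis"
  show "continuous_on UNIV (iter_deriv vs (\<lambda>x. c x * h x))"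
    unfolding iter_deriv_mult[OF c h vs]
    apply (rule cont_sum_list[where F="\<lambda>p x. iter_deriv (fst p) c x * iter_deriv (snd p) h x"])
    using leib_set vs
    by (intro continuous_intros smooth_cont[OF c] smooth_cont[OF h]) blast+
next
  fix vs :: "'a list" and v :: 'a and x assume vs: "set vs \<subseteq> Basis" and v: "v \<in> Basis"
  have "HVD (\<lambda>y. \<Sum>p\<leftarrow>leib vs. iter_deriv (fst p) c y * iter_deriv (snd p) h y) v x
           (\<Sum>p\<leftarrow>leib vs. iter_deriv (fst p) c x * iter_deriv (v#snd p) h x + iter_deriv (v#fst p) c x * iter_deriv (snd p) h x)"
  proof (rule HVD_sum_list[where F="\<lambda>p y. iter_deriv (fst p) c y * iter_deriv (snd p) h y"])
    fix p assume p: "p \<in> set (leib vs)"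
    then have a: "set (fst p) \<subseteq> Basis" and b: "set (snd p) \<subseteq> Basis" using leib_set vs by blast+
    show "HVD (\<lambda>y. iter_deriv (fst p) c y * iter_deriv (snd p) h y) v x
       (iter_deriv (fst p) c x * iter_deriv (v # snd p) h x + iter_deriv (v # fst p) c x * iter_deriv (snd p) h x)"
        using has_vector_derivative_mult[OF smooth_HVD[OF c a v] smooth_HVD[OF h b v]] by simp
  qed
  then show "\<exists>d. HVD (iter_deriv vs (\<lambda>x. c x * h x)) v x d"
    unfolding iter_deriv_mult[OF c h vs] by blast
qed

definition bsmooth :: "('a::euclidean_space \<Rightarrow> complex) \<Rightarrow> bool" where
  "bsmooth c \<longleftrightarrow> smooth_fun c \<and> (\<forall>vs. set vs \<subseteq> Basis \<longrightarrow> (\<exists>B. \<forall>x. norm (iter_deriv vs c x) \<le> B))"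

lemma schwartz_smooth: "schwartz f \<Longrightarrow> smooth_fun f"
  by (simp add: schwartz_def)

lemma schwartz_bound: "schwartz f \<Longrightarrow> set vs \<subseteq> Basis \<Longrightarrow> \<exists>C. \<forall>x. (1 + norm x) ^ n * norm (iter_deriv vs f x) \<le> C"
  by (simp add: schwartz_def)

lemma schwartz_iter: "schwartz f \<Longrightarrow> set ws \<subseteq> Basis \<Longrightarrow> schwartz (iter_deriv ws f)"
  unfolding schwartz_def
  using smooth_iter[of f ws] by (simp add: iter_deriv_append[symmetric])

lemma schwartz_lin:
  assumes f: "schwartz f" and g: "schwartz g"
  shows "schwartz (\<lambda>x. a * f x + b * g x)"
  unfolding schwartz_def
proof (intro conjI allI impI)
  show "smooth_fun (\<lambda>x. a * f x + b * g x)"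
    using smooth_lin schwartz_smooth f g by blast
  fix vs :: "'a list" and n :: nat assume vs: "set vs \<subseteq> Basis"
  obtain C1 where C1: "\<And>x. (1 + norm x) ^ n * norm (iter_deriv vs f x) \<le> C1"
    using schwartz_bound[OF f vs] by blast
  obtain C2 where C2: "\<And>x. (1 + norm x) ^ n * norm (iter_deriv vs g x) \<le> C2"
    using schwartz_bound[OF g vs] by blast
  show "\<exists>C. \<forall>x. (1 + norm x) ^ n * norm (iter_deriv vs (\<lambda>x. a * f x + b * g x) x) \<le> C"
  proof (intro exI allI)
    fix x
    have "(1 + norm x) ^ n * norm (iter_deriv vs (\<lambda>x. a * f x + b * g x) x)
        = (1 + norm x) ^ n * norm (a * iter_deriv vs f x + b * iter_deriv vs g x)"
      using iter_deriv_lin[OF schwartz_smooth[OF f] schwartz_smooth[OF g] vs] by simp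
    also have "\<dots> \<le> (1 + norm x) ^ n * (norm a * norm (iter_deriv vs f x) + norm b * norm (iter_deriv vs g x))"
      by (intro mult_left_mono) (auto intro: norm_triangle_le simp: norm_mult)
    also have "\<dots> = norm a * ((1 + norm x) ^ n * norm (iter_deriv vs f x)) + norm b * ((1 + norm x) ^ n * norm (iter_deriv vs g x))"
      by (simp add: algebra_simps)
    also have "\<dots> \<le> norm a * C1 + norm b * C2"
      by (intro add_mono mult_left_mono C1 C2) auto
    finally show "(1 + norm x) ^ n * norm (iter_deriv vs (\<lambda>x. a * f x + b * g x) x) \<le> norm a * C1 + norm b * C2" .
  qed
qed

lemma schwartz_add: "schwartz f \<Longrightarrow> schwartz g \<Longrightarrow> schwartz (\<lambda>x. f x + g x)"
  using schwartz_lin[of f g 1 1] by simp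
lemma schwartz_diff: "schwartz f \<Longrightarrow> schwartz g \<Longrightarrow> schwartz (\<lambda>x. f x - g x)"
  using schwartz_lin[of f g 1 "-1"] by simp
lemma schwartz_cmult: "schwartz f \<Longrightarrow> schwartz (\<lambda>x. c * f x)"
  using schwartz_lin[of f f c 0] by simp

lemma weight_shift: "(1 + norm (y::'a::real_normed_vector)) \<le> (1 + norm (a + y)) * (1 + norm a)"
proof -
  have "norm y \<le> norm (a + y) + norm a" using norm_triangle_ineq4[of "a + y" a] by simp
  then show ?thesis by (simp add: algebra_simps) (smt (verit) norm_ge_zero mult_nonneg_nonneg)
qed

lemma weight_shift_pow: "(1 + norm (y::'a::real_normed_vector)) ^ n \<le> (1 + norm (a + y)) ^ n * (1 + norm a) ^ n"
  by (metis power_mono power_mult_distrib weight_shift norm_ge_zero add_nonneg_nonneg zero_le_one)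

lemma HVD_scale:
  assumes f: "smooth_fun f" and vs: "set vs \<subseteq> Basis" and v: "v \<in> Basis"
  shows "HVD (\<lambda>y. iter_deriv vs f (a + s *\<^sub>R y)) v y (s *\<^sub>R iter_deriv (v#vs) f (a + s *\<^sub>R y))"
proof -
  have d: "HVD (iter_deriv vs f) v (a + s *\<^sub>R y) (iter_deriv (v#vs) f (a + s *\<^sub>R y))"
    by (rule smooth_HVD[OF f vs v])
  have "((\<lambda>t. iter_deriv vs f ((a + s *\<^sub>R y) + t *\<^sub>R v)) \<circ> (\<lambda>t. s * t) has_vector_derivative
         s *\<^sub>R iter_deriv (v#vs) f (a + s *\<^sub>R y)) (at 0)"
    apply (rule vector_diff_chain_at)
     apply (simp add: has_real_derivative_iff_has_vector_derivative[symmetric] DERIV_cmult_Id)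
    using d by simp
  then show ?thesis by (simp add: o_def algebra_simps)
qed

lemma cont_affine:
  fixes a :: "'a::real_normed_vector"
  assumes "continuous_on UNIV g"
  shows "continuous_on S (\<lambda>y. g (a + s *\<^sub>R y))"
proof -
  have 1: "continuous_on S (\<lambda>y. a + s *\<^sub>R y)" by (intro continuous_intros)
  have 2: "continuous_on ((\<lambda>y. a + s *\<^sub>R y) ` S) g" by (rule continuous_on_subset[OF assms]) simp
  show ?thesis using continuous_on_compose[OF 1 2] by (simp add: o_def)
qed

lemma smooth_scale:
  assumes f: "smooth_fun f"
  shows "smooth_fun (\<lambda>y. f (a + s *\<^sub>R y))"
proof (rule smooth_intro)
  fix vs :: "'a list" assume vs: "set vs \<subseteq> Basis"
  have "continuous_on UNIV (\<lambda>y. (s ^ length vs) *\<^sub>R iter_deriv vs f (a + s *\<^sub>R y))"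
    by (intro continuous_intros cont_affine smooth_cont[OF f vs])
  then show "continuous_on UNIV (iter_deriv vs (\<lambda>y. f (a + s *\<^sub>R y)))"
    by (simp add: iter_deriv_scale[OF f vs])
next
  fix vs :: "'a list" and v :: 'a and x assume vs: "set vs \<subseteq> Basis" and v: "v \<in> Basis"
  have "HVD (\<lambda>y. (s ^ length vs) *\<^sub>R iter_deriv vs f (a + s *\<^sub>R y)) v x
         ((s ^ length vs) *\<^sub>R (s *\<^sub>R iter_deriv (v#vs) f (a + s *\<^sub>R x)))"
    using HVD_scale[OF f vs v] by (intro bounded_linear.has_vector_derivative[OF bounded_linear_scaleR_right])
  then show "\<exists>d. HVD (iter_deriv vs (\<lambda>y. f (a + s *\<^sub>R y))) v x d"
    by (auto simp: iter_deriv_scale[OF f vs])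
qed

lemma schwartz_affine:
  assumes f: "schwartz f" and s: "\<bar>s\<bar> = 1"
  shows "schwartz (\<lambda>y. f (a + s *\<^sub>R y))"
  unfolding schwartz_def
proof (intro conjI allI impI)
  show "smooth_fun (\<lambda>y. f (a + s *\<^sub>R y))" by (rule smooth_scale[OF schwartz_smooth[OF f]])
  fix vs :: "'a list" and n :: nat assume vs: "set vs \<subseteq> Basis"
  obtain C where C: "\<And>x. (1 + norm x) ^ n * norm (iter_deriv vs f x) \<le> C"
    using schwartz_bound[OF f vs] by blast
  show "\<exists>C. \<forall>x. (1 + norm x) ^ n * norm (iter_deriv vs (\<lambda>y. f (a + s *\<^sub>R y)) x) \<le> C"
  proof (intro exI allI)
    fix y
    have "(1 + norm y) ^ n * norm (iter_deriv vs (\<lambda>y. f (a + s *\<^sub>R y)) y)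
        = (1 + norm (s *\<^sub>R y)) ^ n * norm (iter_deriv vs f (a + s *\<^sub>R y))"
      using s by (simp add: iter_deriv_scale[OF schwartz_smooth[OF f] vs] power_abs)
    also have "\<dots> \<le> ((1 + norm (a + s *\<^sub>R y)) ^ n * (1 + norm a) ^ n) * norm (iter_deriv vs f (a + s *\<^sub>R y))"
      by (intro mult_right_mono weight_shift_pow) auto
    also have "\<dots> = (1 + norm a) ^ n * ((1 + norm (a + s *\<^sub>R y)) ^ n * norm (iter_deriv vs f (a + s *\<^sub>R y)))"
      by (simp add: algebra_simps)
    also have "\<dots> \<le> (1 + norm a) ^ n * C"
      by (intro mult_left_mono C) auto
    finally show "(1 + norm y) ^ n * norm (iter_deriv vs (\<lambda>y. f (a + s *\<^sub>R y)) y) \<le> (1 + norm a) ^ n * C" .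
  qed
qed

lemma schwartz_translate: "schwartz f \<Longrightarrow> schwartz (\<lambda>y. f (a + y))"
  using schwartz_affine[of f 1 a] by simp



section \<open>Seminorms\<close>

lemma sn_bdd: "schwartz f \<Longrightarrow> set vs \<subseteq> Basis \<Longrightarrow> bdd_above (range (\<lambda>x. (1 + norm x) ^ n * norm (iter_deriv vs f x)))"
  using schwartz_bound[of f vs n] by (auto simp: bdd_above_def)

lemma sn_le: "schwartz f \<Longrightarrow> set vs \<subseteq> Basis \<Longrightarrow> (1 + norm x) ^ n * norm (iter_deriv vs f x) \<le> schwartz_seminorm n vs f"
  unfolding schwartz_seminorm_def by (rule cSUP_upper[OF UNIV_I sn_bdd])

lemma sn_le': "schwartz f \<Longrightarrow> set vs \<subseteq> Basis \<Longrightarrow> norm (iter_deriv vs f x) \<le> schwartz_seminorm 0 vs f"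
  using sn_le[of f vs x 0] by simp

lemma sn_least: "(\<And>x. (1 + norm x) ^ n * norm (iter_deriv vs f x) \<le> B) \<Longrightarrow> schwartz_seminorm n vs f \<le> B"
  unfolding schwartz_seminorm_def by (rule cSUP_least) auto

lemma sn_nonneg: "schwartz f \<Longrightarrow> set vs \<subseteq> Basis \<Longrightarrow> 0 \<le> schwartz_seminorm n vs f"
  by (rule order_trans[OF _ sn_le[of f vs 0 n]]) auto

definition IDX :: "nat \<Rightarrow> (nat \<times> 'a::euclidean_space list) set" where
  "IDX N = {..N} \<times> {vs. set vs \<subseteq> Basis \<and> length vs \<le> N}"

lemma finite_IDX: "finite (IDX N)"
  unfolding IDX_def by (intro finite_cartesian_product finite_lists_length_le) auto

lemma IDX_mono: "N \<le> M \<Longrightarrow> IDX N \<subseteq> IDX M"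
  unfolding IDX_def by auto

definition SNS :: "nat \<Rightarrow> ('a::euclidean_space \<Rightarrow> complex) \<Rightarrow> real" where
  "SNS N f = (\<Sum>(n, vs) \<in> IDX N. schwartz_seminorm n vs f)"

lemma SNS_nonneg: "schwartz f \<Longrightarrow> 0 \<le> SNS N f"
  unfolding SNS_def IDX_def by (intro sum_nonneg) (auto intro: sn_nonneg)

lemma SNS_mono: "schwartz f \<Longrightarrow> N \<le> M \<Longrightarrow> SNS N f \<le> SNS M f"
  unfolding SNS_def
  by (rule sum_mono2[OF finite_IDX IDX_mono]) (auto simp: IDX_def intro: sn_nonneg)

lemma sn_le_SNS: "schwartz_seminorm n vs f \<le> SNS N f" if "schwartz f" "set vs \<subseteq> Basis" "n \<le> N" "length vs \<le> N"
proof -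
  have "(\<lambda>(n, vs). schwartz_seminorm n vs f) (n, vs) \<le> sum (\<lambda>(n, vs). schwartz_seminorm n vs f) (IDX N)"
    by (rule member_le_sum) (use that in \<open>auto simp: IDX_def finite_IDX[unfolded IDX_def] intro: sn_nonneg\<close>)
  then show ?thesis by (simp add: SNS_def)
qed

section \<open>Tempered distributions\<close>

lemma tempered_add: "tempered T \<Longrightarrow> schwartz f \<Longrightarrow> schwartz g \<Longrightarrow> T (\<lambda>x. f x + g x) = T f + T g"
  unfolding tempered_def by (elim conjE allE impE) assumption+

lemma tempered_cmult: "tempered T \<Longrightarrow> schwartz f \<Longrightarrow> T (\<lambda>x. c * f x) = c * T f"
  unfolding tempered_def by (elim conjE allE impE) assumption+

lemma tempered_diff:
  assumes T: "tempered T" and f: "schwartz f" and g: "schwartz g"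
  shows "T (\<lambda>x. f x - g x) = T f - T g"
proof -
  have "T (\<lambda>x. f x + (-1) * g x) = T f + T (\<lambda>x. (-1) * g x)"
    by (rule tempered_add[OF T f schwartz_cmult[OF g]])
  also have "T (\<lambda>x. (-1) * g x) = - T g" using tempered_cmult[OF T g, of "-1"] by simp
  finally show ?thesis by simp
qed

lemma iter_deriv_zero: "iter_deriv vs (\<lambda>x. 0) = (\<lambda>x. 0)"
  by (cases "vs = []") (auto simp: iter_deriv_const)

lemma schwartz_zero: "schwartz (\<lambda>x. 0)"
  unfolding schwartz_def by (auto simp: smooth_const iter_deriv_zero)

lemma tempered_zero: "tempered T \<Longrightarrow> T (\<lambda>x. 0) = 0"
  using tempered_cmult[OF _ schwartz_zero, of T 0] by simp

lemma tempered_bound: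
  assumes "tempered T"
  obtains C N where "C \<ge> 0" "\<And>f. schwartz f \<Longrightarrow> norm (T f) \<le> C * SNS N f"
proof -
  have "\<exists>C N. \<forall>f. schwartz f \<longrightarrow> norm (T f) \<le> C * SNS N f"
    using assms unfolding tempered_def SNS_def IDX_def by (elim conjE) assumption
  then obtain C N where CN: "\<And>f. schwartz f \<Longrightarrow> norm (T f) \<le> C * SNS N f"
    by blast
  have "norm (T f) \<le> max C 0 * SNS N f" if "schwartz f" for f
  proof -
    have "C * SNS N f \<le> max C 0 * SNS N f"
      by (rule mult_right_mono[OF max.cobounded1 SNS_nonneg[OF that]])
    then show ?thesis using CN[OF that] by linarith
  qed
  then show ?thesis using that[of "max C 0" N] by auto
qed

lemma tempered_tendsto_zero:
  assumes T: "tempered T"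
    and sch: "eventually (\<lambda>h. schwartz (g h)) F"
    and lim: "\<And>n vs. set vs \<subseteq> Basis \<Longrightarrow> ((\<lambda>h. schwartz_seminorm n vs (g h)) \<longlongrightarrow> 0) F"
  shows "((\<lambda>h. T (g h)) \<longlongrightarrow> 0) F"
proof -
  obtain C N where C: "C \<ge> 0" and CN: "\<And>f. schwartz f \<Longrightarrow> norm (T f) \<le> C * SNS N f"
    using tempered_bound[OF T] by blast
  have "((\<lambda>h. \<Sum>p\<in>IDX N. schwartz_seminorm (fst p) (snd p) (g h)) \<longlongrightarrow> (\<Sum>p\<in>(IDX N :: (nat \<times> 'a list) set). 0)) F"
  proof (rule tendsto_sum[where f="\<lambda>p h. schwartz_seminorm (fst p) (snd p) (g h)"])
    fix p assume "p \<in> (IDX N :: (nat \<times> 'a list) set)"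
    then have "set (snd p) \<subseteq> Basis" by (auto simp: IDX_def)
    then show "((\<lambda>h. schwartz_seminorm (fst p) (snd p) (g h)) \<longlongrightarrow> 0) F" by (rule lim)
  qed
  then have "((\<lambda>h. SNS N (g h)) \<longlongrightarrow> 0) F"
    by (simp add: SNS_def case_prod_beta)
  then have "((\<lambda>h. C * SNS N (g h)) \<longlongrightarrow> C * 0) F"
    by (intro tendsto_mult tendsto_const)
  then have lim2: "((\<lambda>h. C * SNS N (g h)) \<longlongrightarrow> 0) F" by simp
  have ev: "eventually (\<lambda>h. norm (T (g h)) \<le> C * SNS N (g h)) F"
    using sch by (rule eventually_mono) (rule CN)
  show ?thesis by (rule Lim_null_comparison[OF ev lim2])
qed



lemma sum_list_mult_distrib: "(c::real) * (\<Sum>p\<leftarrow>L. F p) = (\<Sum>p\<leftarrow>L. c * F p)"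
  by (induction L) (simp_all add: distrib_left)


definition bsmooth_bound :: "('a::euclidean_space \<Rightarrow> complex) \<Rightarrow> 'a list \<Rightarrow> real" where
  "bsmooth_bound c vs = (SOME B. \<forall>x. norm (iter_deriv vs c x) \<le> B)"

lemma bsmooth_bound:
  assumes "bsmooth c" "set vs \<subseteq> Basis"
  shows "norm (iter_deriv vs c x) \<le> bsmooth_bound c vs"
proof -
  obtain B where "\<forall>x. norm (iter_deriv vs c x) \<le> B" using assms unfolding bsmooth_def by blast
  then have "\<forall>x. norm (iter_deriv vs c x) \<le> (SOME B. \<forall>x. norm (iter_deriv vs c x) \<le> B)" by (rule someI)
  then show ?thesis unfolding bsmooth_bound_def by blast
qed

lemma bsmooth_bound_nonneg: "bsmooth c \<Longrightarrow> set vs \<subseteq> Basis \<Longrightarrow> 0 \<le> bsmooth_bound c vs"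
  using bsmooth_bound[of c vs 0] norm_ge_zero order_trans by blast

lemma norm_sum_list_le: "norm (\<Sum>p\<leftarrow>ps. F p :: complex) \<le> (\<Sum>p\<leftarrow>ps. norm (F p))"
  by (induction ps) (auto intro: norm_triangle_le)

lemma sum_list_mono': "(\<And>p. p \<in> set ps \<Longrightarrow> F p \<le> G p) \<Longrightarrow> (\<Sum>p\<leftarrow>ps. F p :: real) \<le> (\<Sum>p\<leftarrow>ps. G p)"
  by (induction ps) (auto intro: add_mono)

lemma leib_pointwise:
  assumes c: "bsmooth c" and f: "smooth_fun f" and vs: "set vs \<subseteq> Basis"
  shows "norm (iter_deriv vs (\<lambda>x. c x * f x) x) \<le>
           (\<Sum>p\<leftarrow>leib vs. bsmooth_bound c (fst p) * norm (iter_deriv (snd p) f x))"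
proof -
  have cs: "smooth_fun c" using c by (simp add: bsmooth_def)
  have "norm (iter_deriv vs (\<lambda>x. c x * f x) x) \<le> (\<Sum>p\<leftarrow>leib vs. norm (iter_deriv (fst p) c x * iter_deriv (snd p) f x))"
    unfolding iter_deriv_mult[OF cs f vs] by (rule norm_sum_list_le)
  also have "\<dots> \<le> (\<Sum>p\<leftarrow>leib vs. bsmooth_bound c (fst p) * norm (iter_deriv (snd p) f x))"
  proof (rule sum_list_mono')
    fix p assume "p \<in> set (leib vs)"
    then have "set (fst p) \<subseteq> Basis" using leib_set vs by blast
    then show "norm (iter_deriv (fst p) c x * iter_deriv (snd p) f x) \<le> bsmooth_bound c (fst p) * norm (iter_deriv (snd p) f x)"
      by (simp add: norm_mult mult_right_mono bsmooth_bound[OF c])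
  qed
  finally show ?thesis .
qed

lemma schwartz_mult:
  assumes c: "bsmooth c" and f: "schwartz f"
  shows "schwartz (\<lambda>x. c x * f x)"
  unfolding schwartz_def
proof (intro conjI allI impI)
  show "smooth_fun (\<lambda>x. c x * f x)"
    using smooth_mult[of c f] c f by (simp add: bsmooth_def schwartz_def)
  fix vs :: "'a list" and n :: nat assume vs: "set vs \<subseteq> Basis"
  show "\<exists>C. \<forall>x. (1 + norm x) ^ n * norm (iter_deriv vs (\<lambda>x. c x * f x) x) \<le> C"
  proof (intro exI allI)
    fix x
    have "(1 + norm x) ^ n * norm (iter_deriv vs (\<lambda>x. c x * f x) x) \<le>
           (1 + norm x) ^ n * (\<Sum>p\<leftarrow>leib vs. bsmooth_bound c (fst p) * norm (iter_deriv (snd p) f x))"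
      by (intro mult_left_mono leib_pointwise c schwartz_smooth[OF f] vs) auto
    also have "\<dots> = (\<Sum>p\<leftarrow>leib vs. bsmooth_bound c (fst p) * ((1 + norm x) ^ n * norm (iter_deriv (snd p) f x)))"
      unfolding sum_list_mult_distrib by (simp add: mult.left_commute)
    also have "\<dots> \<le> (\<Sum>p\<leftarrow>leib vs. bsmooth_bound c (fst p) * schwartz_seminorm n (snd p) f)"
    proof (rule sum_list_mono')
      fix p assume "p \<in> set (leib vs)"
      then have "set (fst p) \<subseteq> Basis" "set (snd p) \<subseteq> Basis" using leib_set vs by blast+
      then show "bsmooth_bound c (fst p) * ((1 + norm x) ^ n * norm (iter_deriv (snd p) f x)) \<le> bsmooth_bound c (fst p) * schwartz_seminorm n (snd p) f"
        by (intro mult_left_mono sn_le f bsmooth_bound_nonneg c)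
    qed
    finally show "(1 + norm x) ^ n * norm (iter_deriv vs (\<lambda>x. c x * f x) x) \<le> (\<Sum>p\<leftarrow>leib vs. bsmooth_bound c (fst p) * schwartz_seminorm n (snd p) f)" .
  qed
qed

lemma sn_affine:
  assumes f: "schwartz f" and s: "\<bar>s\<bar> = 1" and vs: "set vs \<subseteq> Basis"
  shows "schwartz_seminorm n vs (\<lambda>y. f (a + s *\<^sub>R y)) \<le> (1 + norm a) ^ n * schwartz_seminorm n vs f"
proof (rule sn_least)
  fix y
  have "(1 + norm y) ^ n * norm (iter_deriv vs (\<lambda>y. f (a + s *\<^sub>R y)) y)
      = (1 + norm (s *\<^sub>R y)) ^ n * norm (iter_deriv vs f (a + s *\<^sub>R y))"
    using s by (simp add: iter_deriv_scale[OF schwartz_smooth[OF f] vs] power_abs)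
  also have "\<dots> \<le> ((1 + norm (a + s *\<^sub>R y)) ^ n * (1 + norm a) ^ n) * norm (iter_deriv vs f (a + s *\<^sub>R y))"
    by (intro mult_right_mono weight_shift_pow) auto
  also have "\<dots> = (1 + norm a) ^ n * ((1 + norm (a + s *\<^sub>R y)) ^ n * norm (iter_deriv vs f (a + s *\<^sub>R y)))"
    by (simp add: algebra_simps)
  also have "\<dots> \<le> (1 + norm a) ^ n * schwartz_seminorm n vs f"
    by (intro mult_left_mono sn_le f vs) auto
  finally show "(1 + norm y) ^ n * norm (iter_deriv vs (\<lambda>y. f (a + s *\<^sub>R y)) y) \<le> (1 + norm a) ^ n * schwartz_seminorm n vs f" .
qed

lemma HVD_from_quot:
  assumes "((\<lambda>t. inverse t *\<^sub>R (f t - f 0) - D) \<longlongrightarrow> 0) (at (0::real))"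
  shows "(f has_vector_derivative D) (at 0)"
proof -
  have "((\<lambda>t. norm (inverse t *\<^sub>R (f t - f 0) - D)) \<longlongrightarrow> 0) (at (0::real))"
    using tendsto_norm_zero[OF assms] .
  moreover have "eventually (\<lambda>t. norm (inverse t *\<^sub>R (f t - f 0) - D) = norm ((f t - f 0) - (t - 0) *\<^sub>R D) / norm (t - 0)) (at (0::real))"
  proof (rule eventually_mono[OF eventually_neq_at_within[of 0 0 UNIV]])
    fix t :: real assume t: "t \<noteq> 0"
    have "inverse t *\<^sub>R (f t - f 0) - D = inverse t *\<^sub>R ((f t - f 0) - t *\<^sub>R D)"
      using t by (simp add: algebra_simps)
    then show "norm (inverse t *\<^sub>R (f t - f 0) - D) = norm ((f t - f 0) - (t - 0) *\<^sub>R D) / norm (t - 0)"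
      by (simp add: divide_inverse mult.commute)
  qed
  ultimately have "((\<lambda>t. norm ((f t - f 0) - (t - 0) *\<^sub>R D) / norm (t - 0)) \<longlongrightarrow> 0) (at (0::real))"
    by (rule Lim_transform_eventually)
  then show ?thesis
    unfolding has_vector_derivative_def has_derivative_iff_norm
    using bounded_linear_scaleR_left by blast
qed



lemma mvt_vd:
  fixes g :: "real \<Rightarrow> complex"
  assumes d: "\<And>t. t \<in> closed_segment a b \<Longrightarrow> (g has_vector_derivative g' t) (at t)"
    and B: "\<And>t. t \<in> closed_segment a b \<Longrightarrow> norm (g' t) \<le> B"
  shows "norm (g b - g a) \<le> B * \<bar>b - a\<bar>"
proof -
  have "norm (g b - g a) \<le> B * norm (b - a)"
  proof (rule differentiable_bound[OF convex_closed_segment, of a b g "\<lambda>t h. h *\<^sub>R g' t"])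
    fix t assume t: "t \<in> closed_segment a b"
    show "(g has_derivative (\<lambda>h. h *\<^sub>R g' t)) (at t within closed_segment a b)"
      using d[OF t] unfolding has_vector_derivative_def by (rule has_derivative_at_withinI)
    have "onorm (\<lambda>h::real. h *\<^sub>R g' t) = onorm (\<lambda>h::real. h) * norm (g' t)"
      by (rule onorm_scaleR_left[OF bounded_linear_ident])
    then show "onorm (\<lambda>h::real. h *\<^sub>R g' t) \<le> B" using B[OF t] by (simp add: onorm_id)
  qed auto
  then show ?thesis by simp
qed

lemma seg_abs: "(t::real) \<in> closed_segment 0 c \<Longrightarrow> \<bar>t\<bar> \<le> \<bar>c\<bar>"
  using segment_bound1[of t 0 c] by simp

lemma weight_2: 
  assumes "norm (z::'a::real_normed_vector) \<le> 1"
  shows "(1 + norm y) ^ n \<le> 2 ^ n * (1 + norm (y + z)) ^ n"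
proof -
  have "(1 + norm y) ^ n \<le> (1 + norm (z + y)) ^ n * (1 + norm z) ^ n"
    by (rule weight_shift_pow)
  also have "\<dots> \<le> (1 + norm (z + y)) ^ n * 2 ^ n"
    using assms by (intro mult_left_mono power_mono) auto
  finally show ?thesis by (simp add: add.commute mult.commute)
qed

lemma weighted_near:
  assumes f: "schwartz f" and vs: "set vs \<subseteq> Basis" and z: "norm z \<le> 1"
  shows "(1 + norm y) ^ n * norm (iter_deriv vs f (y + z)) \<le> 2 ^ n * schwartz_seminorm n vs f"
proof -
  have "(1 + norm y) ^ n * norm (iter_deriv vs f (y + z)) \<le> (2 ^ n * (1 + norm (y + z)) ^ n) * norm (iter_deriv vs f (y + z))"
    by (intro mult_right_mono weight_2 z) auto
  also have "\<dots> = 2 ^ n * ((1 + norm (y + z)) ^ n * norm (iter_deriv vs f (y + z)))" by simp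
  also have "\<dots> \<le> 2 ^ n * schwartz_seminorm n vs f"
    by (intro mult_left_mono sn_le f vs) auto
  finally show ?thesis .
qed

section \<open>Difference quotients\<close>

definition dquot :: "('a::euclidean_space \<Rightarrow> complex) \<Rightarrow> 'a \<Rightarrow> real \<Rightarrow> 'a \<Rightarrow> complex" where
  "dquot g v t y = complex_of_real (inverse t) * (g (t *\<^sub>R v + y) - g y) - dir_deriv v g y"

lemma dquot_schwartz:
  assumes g: "schwartz g" and v: "v \<in> Basis"
  shows "schwartz (dquot g v t)"
proof -
  have 1: "schwartz (\<lambda>y. g (t *\<^sub>R v + y) - g y)"
    by (rule schwartz_diff[OF schwartz_translate[OF g] g])
  have 2: "schwartz (dir_deriv v g)"
    using schwartz_iter[OF g, of "[v]"] v by simp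
  show ?thesis
    unfolding dquot_def by (rule schwartz_diff[OF schwartz_cmult[OF 1] 2])
qed

lemma iter_deriv_dquot:
  assumes g: "schwartz g" and v: "v \<in> Basis" and vs: "set vs \<subseteq> Basis"
  shows "iter_deriv vs (dquot g v t) y = complex_of_real (inverse t) *
      (iter_deriv vs g (t *\<^sub>R v + y) - iter_deriv vs g y) - iter_deriv (v#vs) g y"
proof -
  have sg: "smooth_fun g" by (rule schwartz_smooth[OF g])
  have s1: "smooth_fun (\<lambda>y. g (t *\<^sub>R v + y))" by (rule smooth_translate[OF sg])
  have s2: "smooth_fun (\<lambda>y. g (t *\<^sub>R v + y) - g y)" by (rule smooth_diff[OF s1 sg])
  have s3: "smooth_fun (dir_deriv v g)" using smooth_iter[OF sg, of "[v]"] v by simp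
  have s4: "smooth_fun (\<lambda>y. complex_of_real (inverse t) * (g (t *\<^sub>R v + y) - g y))" by (rule smooth_cmult[OF s2])
  have "iter_deriv vs (dquot g v t) = (\<lambda>y. iter_deriv vs (\<lambda>y. complex_of_real (inverse t) * (g (t *\<^sub>R v + y) - g y)) y - iter_deriv vs (dir_deriv v g) y)"
    unfolding dquot_def by (rule iter_deriv_diff[OF s4 s3 vs])
  also have "\<dots> = (\<lambda>y. complex_of_real (inverse t) * iter_deriv vs (\<lambda>y. g (t *\<^sub>R v + y) - g y) y - iter_deriv vs (dir_deriv v g) y)"
    by (simp add: iter_deriv_cmult[OF s2 vs])
  also have "\<dots> = (\<lambda>y. complex_of_real (inverse t) * (iter_deriv vs g (t *\<^sub>R v + y) - iter_deriv vs g y) - iter_deriv vs (dir_deriv v g) y)"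
    by (simp add: iter_deriv_diff[OF s1 sg vs] iter_deriv_translate)
  also have "iter_deriv vs (dir_deriv v g) = iter_deriv (v#vs) g"
    using iter_deriv_append[of vs "[v]" g] iter_deriv_comm[OF sg vs v] by simp
  finally show ?thesis by simp
qed

lemma dquot_pointwise:
  assumes g: "schwartz g" and v: "v \<in> Basis" and vs: "set vs \<subseteq> Basis"
    and t: "t \<noteq> 0" "\<bar>t\<bar> \<le> 1"
  shows "(1 + norm y) ^ n * norm (iter_deriv vs (dquot g v t) y) \<le> 2 ^ n * schwartz_seminorm n (v#v#vs) g * \<bar>t\<bar>"
proof -
  have sg: "smooth_fun g" by (rule schwartz_smooth[OF g])
  define W where "W = (1 + norm y) ^ n"
  define M where "M = 2 ^ n * schwartz_seminorm n (v#v#vs) g"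
  have W: "W \<ge> 0" unfolding W_def by simp
  have nv: "norm v = 1" using v by simp
  let ?G = "iter_deriv vs g" and ?G1 = "iter_deriv (v#vs) g" and ?G2 = "iter_deriv (v#v#vs) g"
  have vvs: "set (v#vs) \<subseteq> Basis" "set (v#v#vs) \<subseteq> Basis" using v vs by auto
  have dG: "((\<lambda>s. ?G (y + s *\<^sub>R v)) has_vector_derivative ?G1 (y + s *\<^sub>R v)) (at s)" for s
    by (rule smooth_line_deriv[OF sg vs v])
  have dG1: "((\<lambda>s. ?G1 (y + s *\<^sub>R v)) has_vector_derivative ?G2 (y + s *\<^sub>R v)) (at s)" for s
    by (rule smooth_line_deriv[OF sg vvs(1) v])
  have b2: "norm (W *\<^sub>R ?G2 (y + r *\<^sub>R v)) \<le> M" if "\<bar>r\<bar> \<le> 1" for r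
  proof -
    have "norm (r *\<^sub>R v) \<le> 1" using that nv by simp
    then show ?thesis
      using weighted_near[OF g vvs(2), of "r *\<^sub>R v" y n] W
      unfolding W_def M_def by simp
  qed
  have b1: "norm (W *\<^sub>R (?G1 (y + s *\<^sub>R v) - ?G1 y)) \<le> M * \<bar>s\<bar>" if "\<bar>s\<bar> \<le> 1" for s
  proof -
    have "norm ((\<lambda>r. W *\<^sub>R ?G1 (y + r *\<^sub>R v)) s - (\<lambda>r. W *\<^sub>R ?G1 (y + r *\<^sub>R v)) 0) \<le> M * \<bar>s - 0\<bar>"
    proof (rule mvt_vd)
      fix r assume r: "r \<in> closed_segment 0 s"
      show "((\<lambda>r. W *\<^sub>R ?G1 (y + r *\<^sub>R v)) has_vector_derivative W *\<^sub>R ?G2 (y + r *\<^sub>R v)) (at r)"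
        by (rule bounded_linear.has_vector_derivative[OF bounded_linear_scaleR_right dG1])
      show "norm (W *\<^sub>R ?G2 (y + r *\<^sub>R v)) \<le> M"
        using seg_abs[OF r] that by (intro b2) simp
    qed
    then show ?thesis by (simp add: scaleR_diff_right)
  qed
  have main: "norm (W *\<^sub>R (?G (y + t *\<^sub>R v) - ?G y - t *\<^sub>R ?G1 y)) \<le> (M * \<bar>t\<bar>) * \<bar>t\<bar>"
  proof -
    have "norm ((\<lambda>s. W *\<^sub>R (?G (y + s *\<^sub>R v) - s *\<^sub>R ?G1 y)) t - (\<lambda>s. W *\<^sub>R (?G (y + s *\<^sub>R v) - s *\<^sub>R ?G1 y)) 0) \<le> (M * \<bar>t\<bar>) * \<bar>t - 0\<bar>"
    proof (rule mvt_vd)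
      fix s assume s: "s \<in> closed_segment 0 t"
      have "((\<lambda>s. s *\<^sub>R ?G1 y) has_vector_derivative ?G1 y) (at s)"
        unfolding has_vector_derivative_def by (rule bounded_linear_imp_has_derivative[OF bounded_linear_scaleR_left])
      then show "((\<lambda>s. W *\<^sub>R (?G (y + s *\<^sub>R v) - s *\<^sub>R ?G1 y)) has_vector_derivative W *\<^sub>R (?G1 (y + s *\<^sub>R v) - ?G1 y)) (at s)"
        by (intro bounded_linear.has_vector_derivative[OF bounded_linear_scaleR_right]
             has_vector_derivative_diff dG \<open>((\<lambda>s. s *\<^sub>R ?G1 y) has_vector_derivative ?G1 y) (at s)\<close>)
      have "\<bar>s\<bar> \<le> \<bar>t\<bar>" by (rule seg_abs[OF s])
      then have "norm (W *\<^sub>R (?G1 (y + s *\<^sub>R v) - ?G1 y)) \<le> M * \<bar>s\<bar>" using t by (intro b1) simp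
      also have "\<dots> \<le> M * \<bar>t\<bar>"
        using \<open>\<bar>s\<bar> \<le> \<bar>t\<bar>\<close> sn_nonneg[OF g vvs(2), of n] by (intro mult_left_mono) (auto simp: M_def)
      finally show "norm (W *\<^sub>R (?G1 (y + s *\<^sub>R v) - ?G1 y)) \<le> M * \<bar>t\<bar>" .
    qed
    moreover have "W *\<^sub>R (?G (y + t *\<^sub>R v) - t *\<^sub>R ?G1 y) - W *\<^sub>R (?G (y + 0 *\<^sub>R v) - 0 *\<^sub>R ?G1 y)
        = W *\<^sub>R (?G (y + t *\<^sub>R v) - ?G y - t *\<^sub>R ?G1 y)"
      by (simp add: scaleR_diff_right)
    ultimately show ?thesis by simp
  qed
  have "iter_deriv vs (dquot g v t) y = complex_of_real (inverse t) * (?G (y + t *\<^sub>R v) - ?G y - t *\<^sub>R ?G1 y)"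
    using t by (simp add: iter_deriv_dquot[OF g v vs] add.commute scaleR_conv_of_real algebra_simps)
  then have "W * norm (iter_deriv vs (dquot g v t) y) = inverse \<bar>t\<bar> * norm (W *\<^sub>R (?G (y + t *\<^sub>R v) - ?G y - t *\<^sub>R ?G1 y))"
    using W by (simp add: norm_mult norm_inverse)
  also have "\<dots> \<le> inverse \<bar>t\<bar> * ((M * \<bar>t\<bar>) * \<bar>t\<bar>)"
    by (intro mult_left_mono main) simp
  also have "\<dots> = M * \<bar>t\<bar>"
  proof -
    have "inverse \<bar>t\<bar> * (\<bar>t\<bar> * \<bar>t\<bar>) = \<bar>t\<bar>" using t by (simp add: field_simps)
    then show ?thesis by (simp add: algebra_simps)
  qed
  finally show ?thesis unfolding W_def M_def .
qed

lemma dquot_tendsto: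
  assumes g: "schwartz g" and v: "v \<in> Basis" and vs: "set vs \<subseteq> Basis"
  shows "((\<lambda>t. schwartz_seminorm n vs (dquot g v t)) \<longlongrightarrow> 0) (at (0::real))"
proof -
  let ?M = "2 ^ n * schwartz_seminorm n (v#v#vs) g"
  have "eventually (\<lambda>t::real. t \<noteq> 0 \<and> \<bar>t\<bar> < 1) (at 0)"
    by (intro eventually_conj eventually_neq_at_within)
       (simp add: eventually_at dist_real_def, intro exI[of _ 1], auto)
  then have ev: "eventually (\<lambda>t::real. norm (schwartz_seminorm n vs (dquot g v t)) \<le> ?M * \<bar>t\<bar>) (at 0)"
  proof (rule eventually_mono)
    fix t :: real assume t: "t \<noteq> 0 \<and> \<bar>t\<bar> < 1"
    have "schwartz_seminorm n vs (dquot g v t) \<le> ?M * \<bar>t\<bar>"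
      by (rule sn_least, rule dquot_pointwise[OF g v vs]) (use t in auto)
    moreover have "0 \<le> schwartz_seminorm n vs (dquot g v t)"
      by (rule sn_nonneg[OF dquot_schwartz[OF g v] vs])
    ultimately show "norm (schwartz_seminorm n vs (dquot g v t)) \<le> ?M * \<bar>t\<bar>" by simp
  qed
  have "((\<lambda>t::real. ?M * \<bar>t\<bar>) \<longlongrightarrow> ?M * \<bar>0\<bar>) (at 0)"
    by (intro tendsto_intros)
  then have "((\<lambda>t::real. ?M * \<bar>t\<bar>) \<longlongrightarrow> 0) (at 0)" by simp
  then show ?thesis by (rule Lim_null_comparison[OF ev])
qed



lemma norm_sum_list_basis:
  assumes "\<forall>p\<in>set cs. snd p \<in> (Basis::'a::euclidean_space set)"
  shows "norm (\<Sum>p\<leftarrow>cs. fst p *\<^sub>R snd p) \<le> (\<Sum>p\<leftarrow>cs. \<bar>fst p\<bar>)"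
  using assms
proof (induction cs)
  case Nil
  then show ?case by simp
next
  case (Cons p cs)
  have "norm (\<Sum>p\<leftarrow>p#cs. fst p *\<^sub>R snd p) \<le> norm (fst p *\<^sub>R snd p) + norm (\<Sum>p\<leftarrow>cs. fst p *\<^sub>R snd p)"
    using norm_triangle_ineq[of "fst p *\<^sub>R snd p" "\<Sum>p\<leftarrow>cs. fst p *\<^sub>R snd p"] by simp
  also have "norm (fst p *\<^sub>R snd p) = \<bar>fst p\<bar>" using Cons.prems by simp
  finally show ?case using Cons by simp
qed

lemma telescope:
  fixes H :: "'a::euclidean_space \<Rightarrow> complex"
  assumes dH: "\<And>b z. b \<in> Basis \<Longrightarrow> HVD H b z (D b z)"
    and bnd: "\<And>b z. b \<in> Basis \<Longrightarrow> norm (z - y) \<le> 1 \<Longrightarrow> norm (D b z) \<le> M"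
    and cs: "\<forall>p\<in>set cs. snd p \<in> Basis" "(\<Sum>p\<leftarrow>cs. \<bar>fst p\<bar>) \<le> 1"
  shows "norm (H (y + (\<Sum>p\<leftarrow>cs. fst p *\<^sub>R snd p)) - H y) \<le> M * (\<Sum>p\<leftarrow>cs. \<bar>fst p\<bar>)"
  using cs
proof (induction cs)
  case Nil
  then show ?case by simp
next
  case (Cons p cs)
  obtain c b where p: "p = (c, b)" by (cases p)
  have b: "b \<in> Basis" using Cons.prems p by simp
  define P where "P = (\<Sum>p\<leftarrow>cs. fst p *\<^sub>R snd p)"
  have sc: "(\<Sum>p\<leftarrow>cs. \<bar>fst p\<bar>) \<le> 1 - \<bar>c\<bar>" using Cons.prems p by simp
  have IH: "norm (H (y + P) - H y) \<le> M * (\<Sum>p\<leftarrow>cs. \<bar>fst p\<bar>)"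
    unfolding P_def using Cons.IH Cons.prems sc by simp
  have nP: "norm P \<le> (\<Sum>p\<leftarrow>cs. \<bar>fst p\<bar>)"
    unfolding P_def by (rule norm_sum_list_basis) (use Cons.prems in simp)
  have step: "norm (H ((y + P) + c *\<^sub>R b) - H ((y + P) + 0 *\<^sub>R b)) \<le> M * \<bar>c - 0\<bar>"
  proof (rule mvt_vd[of 0 c "\<lambda>r. H ((y + P) + r *\<^sub>R b)"])
    fix r assume r: "r \<in> closed_segment 0 c"
    show "((\<lambda>r. H ((y + P) + r *\<^sub>R b)) has_vector_derivative D b ((y + P) + r *\<^sub>R b)) (at r)"
      by (rule HVD_shift, rule dH[OF b])
    have "norm ((y + P + r *\<^sub>R b) - y) \<le> norm P + norm (r *\<^sub>R b)"
      using norm_triangle_ineq[of P "r *\<^sub>R b"] by (simp add: algebra_simps)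
    also have "\<dots> \<le> (\<Sum>p\<leftarrow>cs. \<bar>fst p\<bar>) + \<bar>c\<bar>"
      using nP seg_abs[OF r] b by simp
    also have "\<dots> \<le> 1" using sc by simp
    finally show "norm (D b ((y + P) + r *\<^sub>R b)) \<le> M" by (intro bnd b)
  qed
  have "H (y + (\<Sum>p\<leftarrow>p#cs. fst p *\<^sub>R snd p)) - H y =
        (H ((y + P) + c *\<^sub>R b) - H ((y + P) + 0 *\<^sub>R b)) + (H (y + P) - H y)"
    by (simp add: p P_def algebra_simps)
  then have "norm (H (y + (\<Sum>p\<leftarrow>p#cs. fst p *\<^sub>R snd p)) - H y) \<le> M * \<bar>c\<bar> + M * (\<Sum>p\<leftarrow>cs. \<bar>fst p\<bar>)"
    using step IH by (smt (verit) norm_triangle_ineq diff_0_right)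
  then show ?case by (simp add: p distrib_left)
qed

lemma basis_list_obtain:
  obtains L :: "'a::euclidean_space list" where "set L = Basis" "distinct L"
  using finite_distinct_list[OF finite_Basis] by blast

lemma translate_pointwise:
  assumes g: "schwartz g" and vs: "set vs \<subseteq> Basis"
    and k: "real DIM('a) * norm k \<le> 1"
  shows "(1 + norm y) ^ n * norm (iter_deriv vs g (k + y) - iter_deriv vs g y)
     \<le> (2 ^ n * (\<Sum>b\<in>(Basis::'a::euclidean_space set). schwartz_seminorm n (b#vs) g)) * (real DIM('a) * norm k)"
proof -
  obtain L :: "'a list" where L: "set L = Basis" "distinct L" by (rule basis_list_obtain)
  define W where "W = (1 + norm y) ^ n"
  define M where "M = 2 ^ n * (\<Sum>b\<in>(Basis::'a set). schwartz_seminorm n (b#vs) g)"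
  define cs where "cs = map (\<lambda>b. (k \<bullet> b, b)) L"
  have W: "W \<ge> 0" unfolding W_def by simp
  have sg: "smooth_fun g" by (rule schwartz_smooth[OF g])
  have ksum: "(\<Sum>p\<leftarrow>cs. fst p *\<^sub>R snd p) = k"
    using euclidean_representation[of k] L sum.distinct_set_conv_list[OF L(2), of "\<lambda>b. (k \<bullet> b) *\<^sub>R b"]
    by (simp add: cs_def o_def)
  have asum: "(\<Sum>p\<leftarrow>cs. \<bar>fst p\<bar>) = (\<Sum>b\<in>Basis. \<bar>k \<bullet> b\<bar>)"
    using L sum.distinct_set_conv_list[OF L(2), of "\<lambda>b. \<bar>k \<bullet> b\<bar>"]
    by (simp add: cs_def o_def)
  have "(\<Sum>b\<in>(Basis::'a set). \<bar>k \<bullet> b\<bar>) \<le> (\<Sum>b\<in>(Basis::'a set). norm k)"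
    by (intro sum_mono Basis_le_norm)
  then have asum2: "(\<Sum>p\<leftarrow>cs. \<bar>fst p\<bar>) \<le> real DIM('a) * norm k" using asum by simp
  have "norm ((\<lambda>z. W *\<^sub>R iter_deriv vs g z) (y + (\<Sum>p\<leftarrow>cs. fst p *\<^sub>R snd p)) - (\<lambda>z. W *\<^sub>R iter_deriv vs g z) y)
       \<le> M * (\<Sum>p\<leftarrow>cs. \<bar>fst p\<bar>)"
  proof (rule telescope[where D="\<lambda>b z. W *\<^sub>R iter_deriv (b#vs) g z"])
    fix b z assume b: "b \<in> (Basis::'a set)"
    show "HVD (\<lambda>z. W *\<^sub>R iter_deriv vs g z) b z (W *\<^sub>R iter_deriv (b # vs) g z)"
      by (rule bounded_linear.has_vector_derivative[OF bounded_linear_scaleR_right smooth_HVD[OF sg vs b]])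
  next
    fix b z assume b: "b \<in> (Basis::'a set)" and z: "norm (z - y) \<le> 1"
    have bvs: "set (b#vs) \<subseteq> Basis" using b vs by simp
    have "norm (W *\<^sub>R iter_deriv (b # vs) g (y + (z - y))) \<le> 2 ^ n * schwartz_seminorm n (b#vs) g"
      using weighted_near[OF g bvs z, of y n] W unfolding W_def by simp
    also have "\<dots> \<le> M"
      unfolding M_def
      using vs by (intro mult_left_mono member_le_sum b) (auto intro!: sn_nonneg[OF g])
    finally show "norm (W *\<^sub>R iter_deriv (b # vs) g z) \<le> M" by simp
  next
    show "\<forall>p\<in>set cs. snd p \<in> Basis" using L by (auto simp: cs_def)
    show "(\<Sum>p\<leftarrow>cs. \<bar>fst p\<bar>) \<le> 1" using asum2 k by simp
  qed
  then have "W * norm (iter_deriv vs g (k + y) - iter_deriv vs g y) \<le> M * (\<Sum>p\<leftarrow>cs. \<bar>fst p\<bar>)"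
    using W by (simp add: ksum add.commute scaleR_diff_right[symmetric])
  also have "\<dots> \<le> M * (real DIM('a) * norm k)"
  proof (intro mult_left_mono asum2)
    show "0 \<le> M" unfolding M_def using vs by (intro mult_nonneg_nonneg sum_nonneg) (auto intro!: sn_nonneg[OF g])
  qed
  finally show ?thesis unfolding W_def M_def .
qed

lemma translate_tendsto:
  assumes g: "schwartz g" and vs: "set vs \<subseteq> Basis"
  shows "((\<lambda>k. schwartz_seminorm n vs (\<lambda>y. g (k + y) - g y)) \<longlongrightarrow> 0) (at (0::'a::euclidean_space))"
proof -
  let ?M = "2 ^ n * (\<Sum>b\<in>(Basis::'a set). schwartz_seminorm n (b#vs) g)"
  have sg: "smooth_fun g" by (rule schwartz_smooth[OF g])
  have d: "real DIM('a) > 0" by simp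
  have "eventually (\<lambda>k::'a. norm k < 1 / real DIM('a)) (at 0)"
    using d by (auto simp: eventually_at dist_norm intro!: exI[of _ "1 / real DIM('a)"])
  then have ev: "eventually (\<lambda>k::'a. norm (schwartz_seminorm n vs (\<lambda>y. g (k + y) - g y)) \<le> ?M * (real DIM('a) * norm k)) (at 0)"
  proof (rule eventually_mono)
    fix k :: 'a assume k: "norm k < 1 / real DIM('a)"
    then have k': "real DIM('a) * norm k \<le> 1" using d by (simp add: field_simps)
    have sch: "schwartz (\<lambda>y. g (k + y) - g y)" by (rule schwartz_diff[OF schwartz_translate[OF g] g])
    have "schwartz_seminorm n vs (\<lambda>y. g (k + y) - g y) \<le> ?M * (real DIM('a) * norm k)"
    proof (rule sn_least)
      fix y
      show "(1 + norm y) ^ n * norm (iter_deriv vs (\<lambda>y. g (k + y) - g y) y) \<le> ?M * (real DIM('a) * norm k)"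
        using translate_pointwise[OF g vs k', of y n]
        by (simp add: iter_deriv_diff[OF smooth_translate[OF sg] sg vs] iter_deriv_translate)
    qed
    moreover have "0 \<le> schwartz_seminorm n vs (\<lambda>y. g (k + y) - g y)" by (rule sn_nonneg[OF sch vs])
    ultimately show "norm (schwartz_seminorm n vs (\<lambda>y. g (k + y) - g y)) \<le> ?M * (real DIM('a) * norm k)" by simp
  qed
  have "((\<lambda>k::'a. ?M * (real DIM('a) * norm k)) \<longlongrightarrow> ?M * (real DIM('a) * norm (0::'a))) (at 0)"
    by (intro tendsto_intros)
  then have "((\<lambda>k::'a. ?M * (real DIM('a) * norm k)) \<longlongrightarrow> 0) (at 0)" by simp
  then show ?thesis by (rule Lim_null_comparison[OF ev])
qed



definition Fs :: "(('a::euclidean_space \<Rightarrow> complex) \<Rightarrow> complex) \<Rightarrow> real \<Rightarrow> ('a \<Rightarrow> complex) \<Rightarrow> 'a \<Rightarrow> complex" where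
  "Fs T s g x = T (\<lambda>y. g (x + s *\<^sub>R y))"

lemma sn_affine_tendsto:
  assumes sch: "eventually (\<lambda>h. schwartz (q h)) F" and s: "\<bar>s\<bar> = 1" and vs: "set vs \<subseteq> Basis"
    and lim: "((\<lambda>h. schwartz_seminorm n vs (q h)) \<longlongrightarrow> 0) F"
  shows "((\<lambda>h. schwartz_seminorm n vs (\<lambda>y. q h (x + s *\<^sub>R y))) \<longlongrightarrow> 0) F"
proof -
  have "((\<lambda>h. (1 + norm x) ^ n * schwartz_seminorm n vs (q h)) \<longlongrightarrow> (1 + norm x) ^ n * 0) F"
    by (intro tendsto_mult tendsto_const lim)
  then have l2: "((\<lambda>h. (1 + norm x) ^ n * schwartz_seminorm n vs (q h)) \<longlongrightarrow> 0) F" by simp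
  have "eventually (\<lambda>h. norm (schwartz_seminorm n vs (\<lambda>y. q h (x + s *\<^sub>R y))) \<le> (1 + norm x) ^ n * schwartz_seminorm n vs (q h)) F"
  proof (rule eventually_mono[OF sch])
    fix h assume qh: "schwartz (q h)"
    have "0 \<le> schwartz_seminorm n vs (\<lambda>y. q h (x + s *\<^sub>R y))"
      by (rule sn_nonneg[OF schwartz_affine[OF qh s] vs])
    then show "norm (schwartz_seminorm n vs (\<lambda>y. q h (x + s *\<^sub>R y))) \<le> (1 + norm x) ^ n * schwartz_seminorm n vs (q h)"
      using sn_affine[OF qh s vs, of n x] by simp
  qed
  then show ?thesis by (rule Lim_null_comparison[OF _ l2])
qed

lemma Fs_cont_at:
  assumes T: "tempered T" and g: "schwartz g" and s: "\<bar>s\<bar> = 1"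
  shows "isCont (Fs T s g) x"
proof -
  define q where "q = (\<lambda>k y. g (k + y) - g y)"
  have qs: "schwartz (q k)" for k unfolding q_def by (rule schwartz_diff[OF schwartz_translate[OF g] g])
  have lim0: "((\<lambda>k. T (\<lambda>y. q k (x + s *\<^sub>R y))) \<longlongrightarrow> 0) (at 0)"
  proof (rule tempered_tendsto_zero[OF T])
    show "eventually (\<lambda>k. schwartz (\<lambda>y. q k (x + s *\<^sub>R y))) (at 0)"
      by (intro always_eventually allI schwartz_affine[OF qs s])
    fix n :: nat and vs :: "'a list" assume vs: "set vs \<subseteq> Basis"
    show "((\<lambda>k. schwartz_seminorm n vs (\<lambda>y. q k (x + s *\<^sub>R y))) \<longlongrightarrow> 0) (at 0)"
      by (rule sn_affine_tendsto[OF _ s vs]) (auto intro!: always_eventually qs[unfolded q_def] simp: q_def translate_tendsto[OF g vs])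
  qed
  have eq: "T (\<lambda>y. q k (x + s *\<^sub>R y)) = Fs T s g (x + k) - Fs T s g x" for k
  proof -
    have "T (\<lambda>y. q k (x + s *\<^sub>R y)) = T (\<lambda>y. g ((x + k) + s *\<^sub>R y) - g (x + s *\<^sub>R y))"
      by (simp add: q_def add_ac)
    also have "\<dots> = T (\<lambda>y. g ((x + k) + s *\<^sub>R y)) - T (\<lambda>y. g (x + s *\<^sub>R y))"
      by (rule tempered_diff[OF T schwartz_affine[OF g s] schwartz_affine[OF g s]])
    finally show ?thesis by (simp add: Fs_def)
  qed
  have "((\<lambda>k. Fs T s g (x + k) - Fs T s g x) \<longlongrightarrow> 0) (at 0)"
    using lim0 unfolding eq .
  then have "((\<lambda>k. Fs T s g (x + k)) \<longlongrightarrow> Fs T s g x) (at 0)"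
    by (simp add: LIM_zero_iff)
  then show ?thesis
    unfolding isCont_def using LIM_offset_zero_cancel by blast
qed

lemma Fs_cont: "tempered T \<Longrightarrow> schwartz g \<Longrightarrow> \<bar>s\<bar> = 1 \<Longrightarrow> continuous_on UNIV (Fs T s g)"
  by (intro continuous_at_imp_continuous_on ballI Fs_cont_at)

lemma Fs_HVD:
  assumes T: "tempered T" and g: "schwartz g" and s: "\<bar>s\<bar> = 1" and v: "v \<in> Basis"
  shows "HVD (Fs T s g) v x (Fs T s (dir_deriv v g) x)"
proof (rule HVD_from_quot)
  have dg: "schwartz (dir_deriv v g)" using schwartz_iter[OF g, of "[v]"] v by simp
  have lim0: "((\<lambda>t. T (\<lambda>y. dquot g v t (x + s *\<^sub>R y))) \<longlongrightarrow> 0) (at 0)"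
  proof (rule tempered_tendsto_zero[OF T])
    show "eventually (\<lambda>t. schwartz (\<lambda>y. dquot g v t (x + s *\<^sub>R y))) (at 0)"
      by (intro always_eventually allI schwartz_affine[OF dquot_schwartz[OF g v] s])
    fix n :: nat and vs :: "'a list" assume vs: "set vs \<subseteq> Basis"
    show "((\<lambda>t. schwartz_seminorm n vs (\<lambda>y. dquot g v t (x + s *\<^sub>R y))) \<longlongrightarrow> 0) (at 0)"
      by (rule sn_affine_tendsto[OF _ s vs]) (auto intro!: always_eventually dquot_schwartz[OF g v] dquot_tendsto[OF g v vs])
  qed
  have eq: "T (\<lambda>y. dquot g v t (x + s *\<^sub>R y)) =
      inverse t *\<^sub>R (Fs T s g (x + t *\<^sub>R v) - Fs T s g (x + 0 *\<^sub>R v)) - Fs T s (dir_deriv v g) x" for t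
  proof -
    let ?A = "\<lambda>y. g ((x + t *\<^sub>R v) + s *\<^sub>R y)" and ?B = "\<lambda>y. g (x + s *\<^sub>R y)"
      and ?C = "\<lambda>y. dir_deriv v g (x + s *\<^sub>R y)"
    have sA: "schwartz ?A" and sB: "schwartz ?B" and sC: "schwartz ?C"
      by (intro schwartz_affine g s dg)+
    have "T (\<lambda>y. dquot g v t (x + s *\<^sub>R y)) = T (\<lambda>y. complex_of_real (inverse t) * (?A y - ?B y) - ?C y)"
      by (simp add: dquot_def add_ac)
    also have "\<dots> = T (\<lambda>y. complex_of_real (inverse t) * (?A y - ?B y)) - T ?C"
      by (rule tempered_diff[OF T schwartz_cmult[OF schwartz_diff[OF sA sB]] sC])
    also have "T (\<lambda>y. complex_of_real (inverse t) * (?A y - ?B y)) = complex_of_real (inverse t) * (T ?A - T ?B)"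
      by (simp add: tempered_cmult[OF T schwartz_diff[OF sA sB]] tempered_diff[OF T sA sB])
    finally show ?thesis by (simp add: Fs_def scaleR_conv_of_real)
  qed
  show "((\<lambda>t. inverse t *\<^sub>R ((\<lambda>t. Fs T s g (x + t *\<^sub>R v)) t - (\<lambda>t. Fs T s g (x + t *\<^sub>R v)) 0) - Fs T s (dir_deriv v g) x) \<longlongrightarrow> 0) (at 0)"
    using lim0 unfolding eq by simp
qed

lemma Fs_iter:
  assumes T: "tempered T" and g: "schwartz g" and s: "\<bar>s\<bar> = 1" and ws: "set ws \<subseteq> Basis"
  shows "iter_deriv ws (Fs T s g) = Fs T s (iter_deriv ws g)"
  using ws
proof (induction ws)
  case Nil
  then show ?case by simp
next
  case (Cons v ws)
  then have v: "v \<in> Basis" and ws: "set ws \<subseteq> Basis" by auto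
  have "iter_deriv (v # ws) (Fs T s g) = dir_deriv v (Fs T s (iter_deriv ws g))"
    using Cons.IH[OF ws] by simp
  also have "\<dots> = Fs T s (dir_deriv v (iter_deriv ws g))"
    by (rule ext, rule dir_deriv_eq, rule Fs_HVD[OF T schwartz_iter[OF g ws] s v])
  finally show ?case by simp
qed

lemma Fs_smooth:
  assumes T: "tempered T" and g: "schwartz g" and s: "\<bar>s\<bar> = 1"
  shows "smooth_fun (Fs T s g)"
proof (rule smooth_intro)
  fix vs :: "'a list" assume vs: "set vs \<subseteq> Basis"
  show "continuous_on UNIV (iter_deriv vs (Fs T s g))"
    unfolding Fs_iter[OF T g s vs] by (rule Fs_cont[OF T schwartz_iter[OF g vs] s])
next
  fix vs :: "'a list" and v :: 'a and x assume vs: "set vs \<subseteq> Basis" and v: "v \<in> Basis"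
  show "\<exists>d. HVD (iter_deriv vs (Fs T s g)) v x d"
    unfolding Fs_iter[OF T g s vs] using Fs_HVD[OF T schwartz_iter[OF g vs] s v] by blast
qed



section \<open>Smooth one-dimensional building block\<close>

definition ek :: "nat \<Rightarrow> real \<Rightarrow> real" where
  "ek k t = (if 0 < t then exp (- inverse t) * inverse t ^ k else 0)"

lemma e1:
  assumes t: "(t::real) \<noteq> 0"
  shows "((\<lambda>t. exp (- inverse t)) has_real_derivative exp (- inverse t) * inverse t ^ 2) (at t)"
  using t by (auto intro!: derivative_eq_intros simp: power2_eq_square)

lemma e2:
  assumes t: "(t::real) \<noteq> 0"
  shows "((\<lambda>t. inverse t ^ k) has_real_derivative - real k * inverse t ^ (k + 1)) (at t)"
proof -
  have d: "((\<lambda>t. inverse t ^ k) has_real_derivative real k * inverse t ^ (k - 1) * (- inverse (t ^ 2))) (at t)"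
    using t by (auto intro!: derivative_eq_intros simp: power2_eq_square)
  have eq: "real k * inverse t ^ (k - 1) * (- inverse (t ^ 2)) = - real k * inverse t ^ (k + 1)"
    using t by (cases k) (auto simp: power2_eq_square field_simps)
  show ?thesis using d unfolding eq .
qed

lemma ek_deriv_pos:
  assumes t: "(t::real) > 0"
  shows "(ek k has_real_derivative (ek (k + 2) t - real k * ek (k + 1) t)) (at t)"
proof -
  have d: "((\<lambda>t. exp (- inverse t) * inverse t ^ k) has_real_derivative
     exp (- inverse t) * inverse t ^ 2 * inverse t ^ k + (- real k * inverse t ^ (k + 1)) * exp (- inverse t)) (at t)"
    using t by (intro DERIV_mult e1 e2) auto
  have eq: "exp (- inverse t) * inverse t ^ 2 * inverse t ^ k + (- real k * inverse t ^ (k + 1)) * exp (- inverse t)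
     = ek (k + 2) t - real k * ek (k + 1) t"
    using t by (simp add: ek_def power_add power2_eq_square algebra_simps)
  have "((\<lambda>t. exp (- inverse t) * inverse t ^ k) has_real_derivative (ek (k + 2) t - real k * ek (k + 1) t)) (at t)"
    using d unfolding eq .
  then show ?thesis
    by (rule has_field_derivative_transform_within_open[of _ _ _ "{0<..}"]) (use t in \<open>auto simp: ek_def\<close>)
qed

lemma ek_deriv_neg:
  assumes t: "(t::real) < 0"
  shows "(ek k has_real_derivative (ek (k + 2) t - real k * ek (k + 1) t)) (at t)"
proof -
  have "((\<lambda>t. 0) has_real_derivative 0) (at t)" by simp
  then have "(ek k has_real_derivative 0) (at t)"
    by (rule has_field_derivative_transform_within_open[of _ _ _ "{..<0}"]) (use t in \<open>auto simp: ek_def\<close>)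
  then show ?thesis using t by (simp add: ek_def)
qed

lemma ek_lim0: "((\<lambda>h. exp (- inverse h) * inverse h ^ m) \<longlongrightarrow> 0) (at_right (0::real))"
proof -
  have "((\<lambda>x. x ^ m / exp x) \<longlongrightarrow> (0::real)) at_top" by (rule tendsto_power_div_exp_0)
  then have "((\<lambda>h. (inverse h) ^ m / exp (inverse h)) \<longlongrightarrow> (0::real)) (at_right 0)"
    by (rule filterlim_compose[OF _ filterlim_inverse_at_top_right])
  then show ?thesis by (simp add: exp_minus divide_inverse mult.commute)
qed

lemma ek_deriv_0: "(ek k has_real_derivative (ek (k + 2) 0 - real k * ek (k + 1) 0)) (at 0)"
proof -
  have r: "((\<lambda>h. (ek k h - ek k 0) / (h - 0)) \<longlongrightarrow> 0) (at_right (0::real))"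
  proof -
    have "((\<lambda>h. exp (- inverse h) * inverse h ^ (k + 1)) \<longlongrightarrow> 0) (at_right (0::real))" by (rule ek_lim0)
    moreover have "eventually (\<lambda>h. exp (- inverse h) * inverse h ^ (k + 1) = (ek k h - ek k 0) / (h - 0)) (at_right (0::real))"
      by (auto simp: eventually_at_right_less eventually_at_filter ek_def divide_inverse elim!: eventually_mono
               intro!: eventually_at_rightI[of 0 1])
    ultimately show ?thesis by (rule Lim_transform_eventually)
  qed
  have l: "((\<lambda>h. (ek k h - ek k 0) / (h - 0)) \<longlongrightarrow> 0) (at_left (0::real))"
  proof -
    have "eventually (\<lambda>h. 0 = (ek k h - ek k 0) / (h - 0)) (at_left (0::real))"
      by (auto simp: ek_def intro!: eventually_at_leftI[of "-1" 0])
    then show ?thesis by (rule Lim_transform_eventually[OF tendsto_const])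
  qed
  have "((\<lambda>h. (ek k h - ek k 0) / (h - 0)) \<longlongrightarrow> 0) (at (0::real))"
    using l r by (simp add: filterlim_split_at)
  then show ?thesis by (simp add: has_field_derivative_iff ek_def)
qed

lemma ek_deriv: "(ek k has_real_derivative (ek (k + 2) t - real k * ek (k + 1) t)) (at t)"
  using ek_deriv_pos ek_deriv_neg ek_deriv_0 by (cases "t > 0"; cases "t < 0") (auto simp: not_less)


lemma ek_cont: "continuous_on UNIV (ek k)"
  by (intro continuous_at_imp_continuous_on ballI DERIV_isCont[OF ek_deriv])

section \<open>A class of smooth real functions\<close>

inductive_set SM :: "('a::euclidean_space \<Rightarrow> real) set" where
  SM_const: "(\<lambda>x. c) \<in> SM"
| SM_inner: "(\<lambda>x. x \<bullet> b) \<in> SM"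
| SM_add: "f \<in> SM \<Longrightarrow> g \<in> SM \<Longrightarrow> (\<lambda>x. f x + g x) \<in> SM"
| SM_mult: "f \<in> SM \<Longrightarrow> g \<in> SM \<Longrightarrow> (\<lambda>x. f x * g x) \<in> SM"
| SM_ek: "f \<in> SM \<Longrightarrow> (\<lambda>x. ek k (f x)) \<in> SM"
| SM_inv: "f \<in> SM \<Longrightarrow> (\<forall>x. f x \<noteq> 0) \<Longrightarrow> (\<lambda>x. inverse (f x)) \<in> SM"

lemma SM_props:
  assumes "f \<in> SM"
  shows "continuous_on UNIV f \<and> (\<forall>v. \<exists>f'\<in>SM. \<forall>x. ((\<lambda>t. f (x + t *\<^sub>R v)) has_real_derivative f' x) (at 0))"
  using assms
proof (induction rule: SM.induct)
  case (SM_const c)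
  show ?case by (auto intro!: bexI[of _ "\<lambda>x. 0"] SM.SM_const)
next
  case (SM_inner b)
  have "continuous_on UNIV (\<lambda>x::'a. x \<bullet> b)" by (intro continuous_intros)
  moreover have "\<exists>f'\<in>SM. \<forall>x. ((\<lambda>t. (x + t *\<^sub>R v) \<bullet> b) has_real_derivative f' x) (at 0)" for v :: 'a
  proof (intro bexI[of _ "\<lambda>x. v \<bullet> b"] allI SM.SM_const)
    fix x :: 'a
    have "((\<lambda>t. x \<bullet> b + t * (v \<bullet> b)) has_real_derivative 0 + 1 * (v \<bullet> b)) (at 0)"
      by (intro DERIV_add DERIV_const DERIV_cmult_right DERIV_ident)
    then show "((\<lambda>t. (x + t *\<^sub>R v) \<bullet> b) has_real_derivative v \<bullet> b) (at 0)"
      by (simp add: inner_add_left)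
  qed
  ultimately show ?case by blast
next
  case (SM_add f g)
  have "continuous_on UNIV (\<lambda>x. f x + g x)" using SM_add.IH by (intro continuous_intros) auto
  moreover have "\<exists>h'\<in>SM. \<forall>x. ((\<lambda>t. f (x + t *\<^sub>R v) + g (x + t *\<^sub>R v)) has_real_derivative h' x) (at 0)" for v
  proof -
    obtain f' g' where f': "f' \<in> SM" "\<And>x. ((\<lambda>t. f (x + t *\<^sub>R v)) has_real_derivative f' x) (at 0)"
      and g': "g' \<in> SM" "\<And>x. ((\<lambda>t. g (x + t *\<^sub>R v)) has_real_derivative g' x) (at 0)"
      using SM_add.IH by blast
    show ?thesis
      by (intro bexI[of _ "\<lambda>x. f' x + g' x"] allI SM.SM_add f' g' DERIV_add)
  qed
  ultimately show ?case by blast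
next
  case (SM_mult f g)
  have "continuous_on UNIV (\<lambda>x. f x * g x)" using SM_mult.IH by (intro continuous_intros) auto
  moreover have "\<exists>h'\<in>SM. \<forall>x. ((\<lambda>t. f (x + t *\<^sub>R v) * g (x + t *\<^sub>R v)) has_real_derivative h' x) (at 0)" for v
  proof -
    obtain f' g' where f': "f' \<in> SM" "\<And>x. ((\<lambda>t. f (x + t *\<^sub>R v)) has_real_derivative f' x) (at 0)"
      and g': "g' \<in> SM" "\<And>x. ((\<lambda>t. g (x + t *\<^sub>R v)) has_real_derivative g' x) (at 0)"
      using SM_mult.IH by blast
    show ?thesis
    proof (intro bexI[of _ "\<lambda>x. f' x * g x + g' x * f x"] allI SM.SM_add SM.SM_mult f' g' SM_mult.hyps)
      fix x
      show "((\<lambda>t. f (x + t *\<^sub>R v) * g (x + t *\<^sub>R v)) has_real_derivative f' x * g x + g' x * f x) (at 0)"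
        using DERIV_mult[OF f'(2)[of x] g'(2)[of x]] by simp
    qed
  qed
  ultimately show ?case by blast
next
  case (SM_ek f k)
  have "continuous_on UNIV (\<lambda>x. ek k (f x))"
    using SM_ek.IH continuous_on_compose2[OF ek_cont, of UNIV f] by auto
  moreover have "\<exists>h'\<in>SM. \<forall>x. ((\<lambda>t. ek k (f (x + t *\<^sub>R v))) has_real_derivative h' x) (at 0)" for v
  proof -
    obtain f' where f': "f' \<in> SM" "\<And>x. ((\<lambda>t. f (x + t *\<^sub>R v)) has_real_derivative f' x) (at 0)"
      using SM_ek.IH by blast
    show ?thesis
    proof (intro bexI[of _ "\<lambda>x. (ek (k + 2) (f x) + (- real k) * ek (k + 1) (f x)) * f' x"] allI
        SM.SM_add SM.SM_mult SM.SM_ek SM.SM_const f' SM_ek.hyps)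
      fix x
      show "((\<lambda>t. ek k (f (x + t *\<^sub>R v))) has_real_derivative (ek (k + 2) (f x) + (- real k) * ek (k + 1) (f x)) * f' x) (at 0)"
        using DERIV_chain2[OF ek_deriv f'(2)[of x], of k] by simp
    qed
  qed
  ultimately show ?case by blast
next
  case (SM_inv f)
  have "continuous_on UNIV (\<lambda>x. inverse (f x))"
    using SM_inv.IH SM_inv.hyps(2) by (intro continuous_on_inverse) auto
  moreover have "\<exists>h'\<in>SM. \<forall>x. ((\<lambda>t. inverse (f (x + t *\<^sub>R v))) has_real_derivative h' x) (at 0)" for v
  proof -
    obtain f' where f': "f' \<in> SM" "\<And>x. ((\<lambda>t. f (x + t *\<^sub>R v)) has_real_derivative f' x) (at 0)"
      using SM_inv.IH by blast
    show ?thesis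
    proof (intro bexI[of _ "\<lambda>x. (-1) * (f' x * (inverse (f x) * inverse (f x)))"] allI
        SM.SM_mult SM.SM_const f' SM.SM_inv SM_inv.hyps)
      fix x
      have "f (x + 0 *\<^sub>R v) \<noteq> 0" using SM_inv.hyps(2) by blast
      from DERIV_inverse_fun[OF f'(2)[of x] this]
      show "((\<lambda>t. inverse (f (x + t *\<^sub>R v))) has_real_derivative (-1) * (f' x * (inverse (f x) * inverse (f x)))) (at 0)"
        by (simp add: power2_eq_square inverse_mult_distrib)
    qed (use SM_inv.hyps(2) in auto)
  qed
  ultimately show ?case by blast
qed

lemma SM_cont: "f \<in> SM \<Longrightarrow> continuous_on UNIV f"
  using SM_props by blast

lemma SM_deriv: "f \<in> SM \<Longrightarrow> \<exists>f'\<in>SM. \<forall>x. ((\<lambda>t. f (x + t *\<^sub>R v)) has_real_derivative f' x) (at 0)"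
  using SM_props by blast

lemma SM_iter:
  assumes "f \<in> SM"
  shows "\<exists>h\<in>SM. iter_deriv vs (\<lambda>x. complex_of_real (f x)) = (\<lambda>x. complex_of_real (h x))"
proof (induction vs)
  case Nil
  then show ?case using assms by auto
next
  case (Cons v vs)
  then obtain h where h: "h \<in> SM" "iter_deriv vs (\<lambda>x. complex_of_real (f x)) = (\<lambda>x. complex_of_real (h x))"
    by blast
  obtain h' where h': "h' \<in> SM" "\<And>x. ((\<lambda>t. h (x + t *\<^sub>R v)) has_real_derivative h' x) (at 0)"
    using SM_deriv[OF h(1)] by blast
  have "iter_deriv (v # vs) (\<lambda>x. complex_of_real (f x)) = (\<lambda>x. complex_of_real (h' x))"
  proof
    fix x
    have "HVD (\<lambda>x. complex_of_real (h x)) v x (complex_of_real (h' x))"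
      by (rule has_vector_derivative_of_real[OF h'(2)])
    then show "iter_deriv (v # vs) (\<lambda>x. complex_of_real (f x)) x = complex_of_real (h' x)"
      using h(2) by (simp add: dir_deriv_eq)
  qed
  then show ?case using h'(1) by blast
qed

lemma SM_smooth:
  assumes "f \<in> SM"
  shows "smooth_fun (\<lambda>x. complex_of_real (f x))"
proof (rule smooth_intro)
  fix vs :: "'a list"
  obtain h where h: "h \<in> SM" "iter_deriv vs (\<lambda>x. complex_of_real (f x)) = (\<lambda>x. complex_of_real (h x))"
    using SM_iter[OF assms] by blast
  show "continuous_on UNIV (iter_deriv vs (\<lambda>x. complex_of_real (f x)))"
    unfolding h(2) by (intro continuous_intros SM_cont h(1))
  fix v :: 'a and x
  obtain h' where h': "h' \<in> SM" "\<And>x. ((\<lambda>t. h (x + t *\<^sub>R v)) has_real_derivative h' x) (at 0)"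
    using SM_deriv[OF h(1)] by blast
  show "\<exists>d. HVD (iter_deriv vs (\<lambda>x. complex_of_real (f x))) v x d"
    unfolding h(2) using has_vector_derivative_of_real[OF h'(2)] by blast
qed

lemma SM_sum: "finite A \<Longrightarrow> (\<And>i. i \<in> A \<Longrightarrow> f i \<in> SM) \<Longrightarrow> (\<lambda>x. \<Sum>i\<in>A. f i x) \<in> SM"
proof (induction A rule: finite_induct)
  case empty
  then show ?case using SM_const[of 0] by simp
next
  case (insert a A)
  then show ?case using SM_add[of "f a" "\<lambda>x. \<Sum>i\<in>A. f i x"] by simp
qed

lemma SM_prod: "finite A \<Longrightarrow> (\<And>i. i \<in> A \<Longrightarrow> f i \<in> SM) \<Longrightarrow> (\<lambda>x. \<Prod>i\<in>A. f i x) \<in> SM"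
proof (induction A rule: finite_induct)
  case empty
  then show ?case using SM_const[of 1] by simp
next
  case (insert a A)
  then show ?case using SM_mult[of "f a" "\<lambda>x. \<Prod>i\<in>A. f i x"] by simp
qed



definition sig :: "real \<Rightarrow> real" where
  "sig t = ek 0 t * inverse (ek 0 t + ek 0 (1 + (-1) * t))"

lemma ek0_pos: "t > 0 \<Longrightarrow> ek 0 t > 0" by (simp add: ek_def)
lemma ek0_nonneg: "ek 0 t \<ge> 0" by (simp add: ek_def)
lemma ek0_zero: "t \<le> 0 \<Longrightarrow> ek 0 t = 0" by (simp add: ek_def)

lemma sig_den_pos: "ek 0 t + ek 0 (1 + (-1) * t) > 0"
proof (cases "t > 0")
  case True
  then show ?thesis using ek0_pos[of t] ek0_nonneg[of "1 + (-1) * t"] by simp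
next
  case False
  then show ?thesis using ek0_pos[of "1 + (-1) * t"] ek0_nonneg[of t] by simp
qed

lemma sig_zero: "t \<le> 0 \<Longrightarrow> sig t = 0"
  by (simp add: sig_def ek0_zero)

lemma sig_one: "t \<ge> 1 \<Longrightarrow> sig t = 1"
proof -
  assume t: "t \<ge> 1"
  then have "ek 0 (1 + (-1) * t) = 0" by (intro ek0_zero) simp
  moreover have "ek 0 t > 0" using t by (intro ek0_pos) simp
  ultimately show ?thesis by (simp add: sig_def)
qed

lemma sig_SM:
  assumes g: "g \<in> SM"
  shows "(\<lambda>x. sig (g x)) \<in> SM"
proof -
  have g1: "(\<lambda>x. 1 + (-1) * g x) \<in> SM" by (rule SM_add[OF SM_const SM_mult[OF SM_const g]])
  have den: "(\<lambda>x. ek 0 (g x) + ek 0 (1 + (-1) * g x)) \<in> SM" by (rule SM_add[OF SM_ek[OF g] SM_ek[OF g1]])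
  have inv: "(\<lambda>x. inverse (ek 0 (g x) + ek 0 (1 + (-1) * g x))) \<in> SM"
  proof (rule SM_inv[OF den], intro allI)
    fix x show "ek 0 (g x) + ek 0 (1 + (-1) * g x) \<noteq> 0" using sig_den_pos[of "g x"] by linarith
  qed
  show ?thesis unfolding sig_def by (rule SM_mult[OF SM_ek[OF g] inv])
qed

definition bb :: "'a::euclidean_space \<Rightarrow> real \<Rightarrow> 'a \<Rightarrow> real" where
  "bb p r x = sig (2 + (- inverse (r ^ 2)) * (\<Sum>b\<in>Basis. (x \<bullet> b + (- (p \<bullet> b))) * (x \<bullet> b + (- (p \<bullet> b)))))"

lemma bb_sum: "(\<Sum>b\<in>Basis. (x \<bullet> b + (- (p \<bullet> b))) * (x \<bullet> b + (- (p \<bullet> b)))) = norm (x - p) ^ 2"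
proof -
  have "norm (x - p) ^ 2 = (x - p) \<bullet> (x - p)" by (simp add: power2_norm_eq_inner)
  also have "\<dots> = (\<Sum>b\<in>Basis. ((x - p) \<bullet> b) * ((x - p) \<bullet> b))" by (rule euclidean_inner)
  finally show ?thesis by (simp add: inner_diff_left)
qed

lemma bb_SM: "bb p r \<in> SM"
  unfolding bb_def
  by (intro sig_SM SM_add SM_mult SM_const SM_sum SM_inner finite_Basis)

lemma bb_one: "r > 0 \<Longrightarrow> norm (x - p) \<le> r \<Longrightarrow> bb p r x = 1"
proof -
  assume r: "r > 0" and d: "norm (x - p) \<le> r"
  have "norm (x - p) ^ 2 \<le> r ^ 2" using d by (intro power_mono) auto
  then have "inverse (r ^ 2) * norm (x - p) ^ 2 \<le> 1" using r by (simp add: field_simps)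
  then show ?thesis unfolding bb_def bb_sum by (intro sig_one) simp
qed

lemma bb_zero: "r > 0 \<Longrightarrow> norm (x - p) \<ge> 2 * r \<Longrightarrow> bb p r x = 0"
proof -
  assume r: "r > 0" and d: "norm (x - p) \<ge> 2 * r"
  have "(2 * r) ^ 2 \<le> norm (x - p) ^ 2" using d r by (intro power_mono) auto
  then have "4 * r ^ 2 \<le> norm (x - p) ^ 2" by (simp add: power_mult_distrib)
  then have "2 * r ^ 2 \<le> norm (x - p) ^ 2" by (smt (verit) zero_le_power2)
  then have "2 \<le> inverse (r ^ 2) * norm (x - p) ^ 2" using r by (simp add: field_simps)
  then show ?thesis unfolding bb_def bb_sum by (intro sig_zero) simp
qed

lemma bump_exists:
  fixes K U :: "'a::euclidean_space set"
  assumes K: "compact K" and U: "open U" and KU: "K \<subseteq> U"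
  obtains \<beta> W C where "\<beta> \<in> SM" "open W" "K \<subseteq> W" "\<And>x. x \<in> W \<Longrightarrow> \<beta> x = 1"
    "compact C" "C \<subseteq> U" "\<And>x. x \<notin> C \<Longrightarrow> \<beta> x = 0"
proof -
  have "\<forall>p\<in>K. \<exists>r>0. cball p (2 * r) \<subseteq> U"
  proof
    fix p assume "p \<in> K"
    then obtain e where e: "e > 0" "cball p e \<subseteq> U" using U KU open_contains_cball by blast
    then show "\<exists>r>0. cball p (2 * r) \<subseteq> U" by (intro exI[of _ "e / 2"]) auto
  qed
  then obtain r where r: "\<And>p. p \<in> K \<Longrightarrow> r p > 0 \<and> cball p (2 * r p) \<subseteq> U" by metis
  have cov: "K \<subseteq> (\<Union>p\<in>K. ball p (r p))" using r by auto
  obtain F where F: "F \<subseteq> K" "finite F" "K \<subseteq> (\<Union>p\<in>F. ball p (r p))"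
    by (rule compactE_image[OF K, of K "\<lambda>p. ball p (r p)", OF _ cov]) auto
  define \<beta> where "\<beta> = (\<lambda>x. 1 + (-1) * (\<Prod>p\<in>F. (1 + (-1) * bb p (r p) x)))"
  have 1: "\<beta> \<in> SM" unfolding \<beta>_def
    by (intro SM_add SM_mult SM_const SM_prod F bb_SM)
  have 2: "open (\<Union>p\<in>F. ball p (r p))" by auto
  have 3: "\<beta> x = 1" if xin: "x \<in> (\<Union>p\<in>F. ball p (r p))" for x
  proof -
    obtain p where p: "p \<in> F" "x \<in> ball p (r p)" using xin by blast
    have "bb p (r p) x = 1" using p F r[of p] by (intro bb_one) (auto simp: dist_norm norm_minus_commute)
    then have "(\<Prod>p\<in>F. (1 + (-1) * bb p (r p) x)) = 0"
      using p F by (intro prod_zero) auto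
    then show ?thesis by (simp add: \<beta>_def)
  qed
  have 4: "compact (\<Union>p\<in>F. cball p (2 * r p))" using F by auto
  have 5: "(\<Union>p\<in>F. cball p (2 * r p)) \<subseteq> U" using F r by blast
  have 6: "\<beta> x = 0" if xout: "x \<notin> (\<Union>p\<in>F. cball p (2 * r p))" for x
  proof -
    have "bb p (r p) x = 0" if pF: "p \<in> F" for p
      using pF xout F r[of p] by (intro bb_zero) (auto simp: dist_norm norm_minus_commute)
    then have "(\<Prod>p\<in>F. (1 + (-1) * bb p (r p) x)) = 1" by simp
    then show ?thesis by (simp add: \<beta>_def)
  qed
  show ?thesis by (rule that[OF 1 2 F(3) 3 4 5 6])
qed

lemma bsmooth_SM_compact:
  assumes f: "f \<in> SM" and C: "compact C" and z: "\<And>x. x \<notin> C \<Longrightarrow> f x = 0"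
  shows "bsmooth (\<lambda>x. complex_of_real (f x))"
  unfolding bsmooth_def
proof (intro conjI allI impI)
  show "smooth_fun (\<lambda>x. complex_of_real (f x))" by (rule SM_smooth[OF f])
  fix vs :: "'a list"
  obtain h where h: "h \<in> SM" "iter_deriv vs (\<lambda>x. complex_of_real (f x)) = (\<lambda>x. complex_of_real (h x))"
    using SM_iter[OF f] by blast
  have "compact (h ` C)" by (rule compact_continuous_image[OF continuous_on_subset[OF SM_cont[OF h(1)]] C]) simp
  then have "bounded (h ` C)" by (rule compact_imp_bounded)
  then obtain B where B0: "\<forall>y\<in>h ` C. norm y \<le> B" unfolding bounded_iff by blast
  have B: "norm (h y) \<le> B" if yC: "y \<in> C" for y using B0 yC by blast
  have clC: "closed C" using C by (rule compact_imp_closed)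
  have out: "iter_deriv vs (\<lambda>x. complex_of_real (f x)) x = 0" if xC: "x \<notin> C" for x
  proof -
    have "iter_deriv vs (\<lambda>x. complex_of_real (f x)) x = iter_deriv vs (\<lambda>x. 0) x"
    proof (rule iter_deriv_local[of "- C"])
      show "open (- C)" using clC by auto
      show "x \<in> - C" using xC by simp
      fix y assume "y \<in> - C" then show "complex_of_real (f y) = 0" using z by simp
    qed
    then show ?thesis by (simp add: iter_deriv_zero)
  qed
  show "\<exists>B. \<forall>x. norm (iter_deriv vs (\<lambda>x. complex_of_real (f x)) x) \<le> B"
  proof (intro exI[of _ "max B 0"] allI)
    fix x
    show "norm (iter_deriv vs (\<lambda>x. complex_of_real (f x)) x) \<le> max B 0"
    proof (cases "x \<in> C")
      case True
      then show ?thesis using B[OF True] h(2) by simp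
    next
      case False
      then show ?thesis using out by simp
    qed
  qed
qed

lemma bsmooth_lin:
  assumes c: "bsmooth c" and d: "bsmooth d"
  shows "bsmooth (\<lambda>x. a * c x + b * d x)"
  unfolding bsmooth_def
proof (intro conjI allI impI)
  have sc: "smooth_fun c" and sd: "smooth_fun d" using c d by (auto simp: bsmooth_def)
  show "smooth_fun (\<lambda>x. a * c x + b * d x)" by (rule smooth_lin[OF sc sd])
  fix vs :: "'a list" assume vs: "set vs \<subseteq> Basis"
  show "\<exists>B. \<forall>x. norm (iter_deriv vs (\<lambda>x. a * c x + b * d x) x) \<le> B"
  proof (intro exI allI)
    fix x
    have "norm (iter_deriv vs (\<lambda>x. a * c x + b * d x) x) = norm (a * iter_deriv vs c x + b * iter_deriv vs d x)"
      by (simp add: iter_deriv_lin[OF sc sd vs])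
    also have "\<dots> \<le> norm a * norm (iter_deriv vs c x) + norm b * norm (iter_deriv vs d x)"
      by (rule order_trans[OF norm_triangle_ineq]) (simp add: norm_mult)
    also have "\<dots> \<le> norm a * bsmooth_bound c vs + norm b * bsmooth_bound d vs"
      by (intro add_mono mult_left_mono bsmooth_bound c d vs) auto
    finally show "norm (iter_deriv vs (\<lambda>x. a * c x + b * d x) x) \<le> norm a * bsmooth_bound c vs + norm b * bsmooth_bound d vs" .
  qed
qed

lemma bsmooth_const: "bsmooth (\<lambda>x. c)"
  unfolding bsmooth_def
proof (intro conjI allI impI smooth_const)
  fix vs :: "'a list"
  show "\<exists>B. \<forall>x. norm (iter_deriv vs (\<lambda>x. c) x) \<le> B"
    by (cases "vs = []") (auto simp: iter_deriv_const)
qed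



lemma compact_sub: "compact C \<Longrightarrow> closed A \<Longrightarrow> A \<subseteq> C \<Longrightarrow> compact A"
  using compact_Int_closed[of C A] by (simp add: Int_absorb1)

lemma bump_ex:
  fixes K U :: "'a::euclidean_space set"
  assumes "compact K" "open U" "K \<subseteq> U"
  shows "\<exists>\<beta> W C. \<beta> \<in> SM \<and> open W \<and> K \<subseteq> W \<and> (\<forall>x\<in>W. \<beta> x = 1) \<and>
    compact C \<and> C \<subseteq> U \<and> (\<forall>x. x \<notin> C \<longrightarrow> \<beta> x = 0)"
  by (rule bump_exists[OF assms], blast)

definition GO :: "(('a::euclidean_space \<Rightarrow> complex) \<Rightarrow> complex) \<Rightarrow> 'a set \<Rightarrow> bool" where
  "GO T U \<longleftrightarrow> open U \<and> (\<forall>f. schwartz f \<and> compact (closure {x. f x \<noteq> 0}) \<and> closure {x. f x \<noteq> 0} \<subseteq> U \<longrightarrow> T f = 0)"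

lemma dist_support_GO: "dist_support T = - \<Union>{U. GO T U}"
  unfolding dist_support_def GO_def by simp

lemma GO_empty:
  assumes T: "tempered T" shows "GO T {}"
  unfolding GO_def
proof (intro conjI allI impI)
  fix f :: "'a \<Rightarrow> complex" assume f: "schwartz f \<and> compact (closure {x. f x \<noteq> 0}) \<and> closure {x. f x \<noteq> 0} \<subseteq> {}"
  then have "{x. f x \<noteq> 0} = {}" using closure_subset[of "{x. f x \<noteq> 0}"] by blast
  then have "f = (\<lambda>x. 0)" by auto
  then show "T f = 0" using tempered_zero[OF T] by simp
qed simp

lemma cb_bsmooth:
  assumes "\<beta> \<in> SM" "compact C" "\<And>x. x \<notin> C \<Longrightarrow> \<beta> x = 0"
  shows "bsmooth (\<lambda>x. complex_of_real (\<beta> x))" "bsmooth (\<lambda>x. 1 - complex_of_real (\<beta> x))"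
proof -
  show b: "bsmooth (\<lambda>x. complex_of_real (\<beta> x))" by (rule bsmooth_SM_compact[OF assms])
  show "bsmooth (\<lambda>x. 1 - complex_of_real (\<beta> x))"
    using bsmooth_lin[OF bsmooth_const b, of 1 1 "-1"] by simp
qed

lemma GO_union:
  assumes T: "tempered T" and U1: "GO T U1" and U2: "GO T U2"
  shows "GO T (U1 \<union> U2)"
  unfolding GO_def
proof (intro conjI allI impI)
  show "open (U1 \<union> U2)" using U1 U2 by (auto simp: GO_def)
  fix f :: "'a \<Rightarrow> complex"
  assume fa: "schwartz f \<and> compact (closure {x. f x \<noteq> 0}) \<and> closure {x. f x \<noteq> 0} \<subseteq> U1 \<union> U2"
  define S where "S = closure {x. f x \<noteq> 0}"
  have f: "schwartz f" and S: "compact S" "S \<subseteq> U1 \<union> U2" using fa by (auto simp: S_def)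
  have o1: "open U1" and o2: "open U2" using U1 U2 by (auto simp: GO_def)
  have K1: "compact (S \<inter> - U2)" using S o2 by (intro compact_Int_closed) auto
  have K1U: "S \<inter> - U2 \<subseteq> U1" using S by auto
  obtain \<beta> W C where \<beta>: "\<beta> \<in> SM" "open W" "S \<inter> - U2 \<subseteq> W" "\<forall>x\<in>W. \<beta> x = 1"
    "compact C" "C \<subseteq> U1" "\<forall>x. x \<notin> C \<longrightarrow> \<beta> x = 0"
    using bump_ex[OF K1 o1 K1U] by blast
  have b1: "bsmooth (\<lambda>x. complex_of_real (\<beta> x))" and b2: "bsmooth (\<lambda>x. 1 - complex_of_real (\<beta> x))"
    using cb_bsmooth[OF \<beta>(1,5)] \<beta>(7) by auto
  define f1 where "f1 = (\<lambda>x. complex_of_real (\<beta> x) * f x)"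
  define f2 where "f2 = (\<lambda>x. (1 - complex_of_real (\<beta> x)) * f x)"
  have sf1: "schwartz f1" unfolding f1_def by (rule schwartz_mult[OF b1 f])
  have sf2: "schwartz f2" unfolding f2_def by (rule schwartz_mult[OF b2 f])
  have "{x. f1 x \<noteq> 0} \<subseteq> C" using \<beta>(7) by (auto simp: f1_def)
  then have c1: "closure {x. f1 x \<noteq> 0} \<subseteq> C"
    using \<beta>(5) by (intro closure_minimal compact_imp_closed) auto
  have c1': "closure {x. f1 x \<noteq> 0} \<subseteq> U1" using c1 \<beta>(6) by blast
  have "T f1 = 0"
    using U1 sf1 c1' compact_sub[OF \<beta>(5) closed_closure c1] unfolding GO_def by blast
  moreover
  have "{x. f2 x \<noteq> 0} \<subseteq> S \<inter> - W"
    using \<beta>(4) closure_subset[of "{x. f x \<noteq> 0}"] by (auto simp: f2_def S_def)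
  then have c2: "closure {x. f2 x \<noteq> 0} \<subseteq> S \<inter> - W"
    using \<beta>(2) by (intro closure_minimal) (auto simp: S_def)
  have cS: "compact (S \<inter> - W)" using S \<beta>(2) by (intro compact_Int_closed) auto
  have "S \<inter> - W \<subseteq> U2" using \<beta>(3) by blast
  then have c2': "closure {x. f2 x \<noteq> 0} \<subseteq> U2" using c2 by blast
  have "T f2 = 0"
    using U2 sf2 c2' compact_sub[OF cS closed_closure c2] unfolding GO_def by blast
  moreover have "f = (\<lambda>x. f1 x + f2 x)" by (auto simp: f1_def f2_def algebra_simps)
  ultimately show "T f = 0" using tempered_add[OF T sf1 sf2] by simp
qed

lemma GO_finite:
  assumes T: "tempered T" and fin: "finite \<U>" and all: "\<And>U. U \<in> \<U> \<Longrightarrow> GO T U"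
  shows "GO T (\<Union>\<U>)"
  using fin all
proof (induction \<U> rule: finite_induct)
  case empty
  then show ?case using GO_empty[OF T] by simp
next
  case (insert U \<U>)
  then show ?case using GO_union[OF T, of U "\<Union>\<U>"] by simp
qed

lemma vanish_compact:
  assumes T: "tempered T" and f: "schwartz f" and cpt: "compact (closure {x. f x \<noteq> 0})"
    and dis: "closure {x. f x \<noteq> 0} \<inter> dist_support T = {}"
  shows "T f = 0"
proof -
  have sub: "closure {x. f x \<noteq> 0} \<subseteq> \<Union>{U. GO T U}"
    using dis unfolding dist_support_GO by blast
  obtain \<U> where U: "\<U> \<subseteq> {U. GO T U}" "finite \<U>" "closure {x. f x \<noteq> 0} \<subseteq> \<Union>\<U>"
    by (rule compactE[OF cpt sub]) (auto simp: GO_def)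
  have "GO T (\<Union>\<U>)" by (rule GO_finite[OF T U(2)]) (use U(1) in blast)
  then show ?thesis using f cpt U(3) by (auto simp: GO_def)
qed



lemma sum_list_zero': "(\<And>p. p \<in> set L \<Longrightarrow> F p = 0) \<Longrightarrow> (\<Sum>p\<leftarrow>L. F p) = (0::complex)"
  by (induction L) auto

lemma sum_list_div: "(\<Sum>p\<leftarrow>L. F p * (G p / d)) = (\<Sum>p\<leftarrow>L. F p * G p) / (d::real)"
  by (induction L) (simp_all add: add_divide_distrib)

lemma bsmooth_scale_bound:
  assumes c: "bsmooth c" and s: "\<bar>s\<bar> \<le> 1" and vs: "set vs \<subseteq> Basis"
  shows "norm (iter_deriv vs (\<lambda>x. c (a + s *\<^sub>R x)) x) \<le> bsmooth_bound c vs"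
proof -
  have sc: "smooth_fun c" using c by (simp add: bsmooth_def)
  have "norm (iter_deriv vs (\<lambda>x. c (a + s *\<^sub>R x)) x) = \<bar>s\<bar> ^ length vs * norm (iter_deriv vs c (a + s *\<^sub>R x))"
    by (simp add: iter_deriv_scale[OF sc vs] power_abs)
  also have "\<dots> \<le> 1 * bsmooth_bound c vs"
    using s by (intro mult_mono power_le_one bsmooth_bound c vs bsmooth_bound_nonneg) auto
  finally show ?thesis by simp
qed

lemma bsmooth_scale:
  assumes c: "bsmooth c" and s: "\<bar>s\<bar> \<le> 1"
  shows "bsmooth (\<lambda>x. c (a + s *\<^sub>R x))"
  unfolding bsmooth_def
proof (intro conjI allI impI)
  show "smooth_fun (\<lambda>x. c (a + s *\<^sub>R x))" using c smooth_scale by (auto simp: bsmooth_def)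
  fix vs :: "'a list" assume vs: "set vs \<subseteq> Basis"
  show "\<exists>B. \<forall>x. norm (iter_deriv vs (\<lambda>x. c (a + s *\<^sub>R x)) x) \<le> B"
    using bsmooth_scale_bound[OF c s vs] by blast
qed

lemma weight_div:
  assumes f: "schwartz f" and vs: "set vs \<subseteq> Basis" and y: "R \<le> norm y" and R: "R \<ge> 0"
  shows "(1 + norm y) ^ n * norm (iter_deriv vs f y) \<le> schwartz_seminorm (Suc n) vs f / (1 + R)"
proof -
  have "(1 + norm y) * ((1 + norm y) ^ n * norm (iter_deriv vs f y)) \<le> schwartz_seminorm (Suc n) vs f"
    using sn_le[OF f vs, of y "Suc n"] by (simp add: mult.assoc)
  moreover have "(1 + R) * ((1 + norm y) ^ n * norm (iter_deriv vs f y)) \<le> (1 + norm y) * ((1 + norm y) ^ n * norm (iter_deriv vs f y))"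
    using y by (intro mult_right_mono) auto
  ultimately have "(1 + R) * ((1 + norm y) ^ n * norm (iter_deriv vs f y)) \<le> schwartz_seminorm (Suc n) vs f"
    by linarith
  then show ?thesis using R by (simp add: field_simps)
qed

lemma vanish_near:
  assumes T: "tempered T" and K: "compact (dist_support T)" and f: "schwartz f"
    and W: "open W" "dist_support T \<subseteq> W" "\<And>x. x \<in> W \<Longrightarrow> f x = 0"
  shows "T f = 0"
proof -
  have "compact (cball (0::'a) 1)" by simp
  then obtain \<beta> W0 C0 where \<beta>: "\<beta> \<in> SM" "open W0" "cball (0::'a) 1 \<subseteq> W0" "\<forall>x\<in>W0. \<beta> x = 1"
    "compact C0" "\<forall>x. x \<notin> C0 \<longrightarrow> \<beta> x = 0"
    using bump_ex[of "cball (0::'a) 1" UNIV] by auto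
  have b1: "bsmooth (\<lambda>x. complex_of_real (\<beta> x))" and b2: "bsmooth (\<lambda>x. 1 - complex_of_real (\<beta> x))"
    using cb_bsmooth[OF \<beta>(1,5)] \<beta>(6) by auto
  define c where "c = (\<lambda>x. 1 - complex_of_real (\<beta> x))"
  have c0: "c x = 0" if "x \<in> W0" for x using \<beta>(4) that by (simp add: c_def)
  have sc: "smooth_fun c" using b2 by (simp add: c_def bsmooth_def)
  have invR: "\<bar>inverse R\<bar> \<le> 1" if "R \<ge> 1" for R :: real
    using that by (simp add: inverse_le_1_iff)
  define hR where "hR = (\<lambda>R x. complex_of_real (\<beta> (0 + inverse R *\<^sub>R x)) * f x)"
  define fR where "fR = (\<lambda>R x. c (0 + inverse R *\<^sub>R x) * f x)"
  have shR: "schwartz (hR R)" if R: "R \<ge> 1" for R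
    unfolding hR_def
    by (intro schwartz_mult[OF bsmooth_scale[OF b1 invR[OF R]] f])
  have sfR: "schwartz (fR R)" if R: "R \<ge> 1" for R
    unfolding fR_def
    by (intro schwartz_mult[OF bsmooth_scale[OF b2[folded c_def] invR[OF R]] f])
  have ThR: "T (hR R) = 0" if R: "R \<ge> 1" for R
  proof (rule vanish_compact[OF T shR[OF R]])
    define CR where "CR = (\<lambda>y. R *\<^sub>R y) ` C0"
    have cCR: "compact CR" unfolding CR_def by (intro compact_continuous_image \<beta>(5) continuous_intros)
    have "{x. hR R x \<noteq> 0} \<subseteq> CR"
    proof
      fix x assume "x \<in> {x. hR R x \<noteq> 0}"
      then have "inverse R *\<^sub>R x \<in> C0" using \<beta>(6) by (auto simp: hR_def)
      moreover have "x = R *\<^sub>R (inverse R *\<^sub>R x)" using R by simp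
      ultimately show "x \<in> CR" unfolding CR_def by blast
    qed
    then have s1: "closure {x. hR R x \<noteq> 0} \<subseteq> CR"
      by (intro closure_minimal compact_imp_closed cCR)
    then show "compact (closure {x. hR R x \<noteq> 0})" by (rule compact_sub[OF cCR closed_closure])
    have "{x. hR R x \<noteq> 0} \<subseteq> - W" using W(3) by (auto simp: hR_def)
    then have "closure {x. hR R x \<noteq> 0} \<subseteq> - W" using W(1) by (intro closure_minimal) auto
    then show "closure {x. hR R x \<noteq> 0} \<inter> dist_support T = {}" using W(2) by blast
  qed
  have TfR: "T (fR R) = T f" if R: "R \<ge> 1" for R
  proof -
    have "fR R = (\<lambda>x. f x - hR R x)" by (auto simp: fR_def hR_def c_def algebra_simps)
    then show ?thesis using tempered_diff[OF T f shR[OF R]] ThR[OF R] by simp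
  qed
  have lim: "((\<lambda>R. T (fR R)) \<longlongrightarrow> 0) at_top"
  proof (rule tempered_tendsto_zero[OF T])
    show "eventually (\<lambda>R. schwartz (fR R)) at_top"
      using eventually_ge_at_top[of "1::real"] by (rule eventually_mono) (rule sfR)
    fix n :: nat and vs :: "'a list" assume vs: "set vs \<subseteq> Basis"
    define Kf where "Kf = (\<Sum>p\<leftarrow>leib vs. bsmooth_bound c (fst p) * schwartz_seminorm (Suc n) (snd p) f)"
    have pw: "(1 + norm y) ^ n * norm (iter_deriv vs (fR R) y) \<le> Kf / (1 + R)" if R: "R \<ge> 1" for R y
    proof -
      have scR: "smooth_fun (\<lambda>x. c (0 + inverse R *\<^sub>R x))" by (rule smooth_scale[OF sc])
      have eq: "iter_deriv vs (fR R) y = (\<Sum>p\<leftarrow>leib vs. iter_deriv (fst p) (\<lambda>x. c (0 + inverse R *\<^sub>R x)) y * iter_deriv (snd p) f y)"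
        unfolding fR_def iter_deriv_mult[OF scR schwartz_smooth[OF f] vs] ..
      have pb: "set (fst p) \<subseteq> Basis" "set (snd p) \<subseteq> Basis" if "p \<in> set (leib vs)" for p
        using leib_set[OF that] vs by auto
      have "(\<Sum>p\<leftarrow>leib vs. (0::real)) \<le> Kf" unfolding Kf_def
      proof (rule sum_list_mono')
        fix p assume p: "p \<in> set (leib vs)"
        show "0 \<le> bsmooth_bound c (fst p) * schwartz_seminorm (Suc n) (snd p) f"
          by (intro mult_nonneg_nonneg bsmooth_bound_nonneg[OF b2[folded c_def] pb(1)[OF p]] sn_nonneg[OF f pb(2)[OF p]])
      qed
      then have Kf0: "0 \<le> Kf" by simp
      show ?thesis
      proof (cases "norm y < R")
        case True
        have z: "iter_deriv (fst p) (\<lambda>x. c (0 + inverse R *\<^sub>R x)) y = 0" if p: "p \<in> set (leib vs)" for p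
        proof -
          have "iter_deriv (fst p) c (0 + inverse R *\<^sub>R y) = iter_deriv (fst p) (\<lambda>x. 0) (0 + inverse R *\<^sub>R y)"
          proof (rule iter_deriv_local[OF \<beta>(2)])
            show "\<And>x. x \<in> W0 \<Longrightarrow> c x = 0" by (rule c0)
            have "norm (inverse R *\<^sub>R y) \<le> 1" using True R by (simp add: field_simps)
            then show "0 + inverse R *\<^sub>R y \<in> W0" using \<beta>(3) by auto
          qed
          then have z0: "iter_deriv (fst p) c (0 + inverse R *\<^sub>R y) = 0" by (simp only: iter_deriv_zero)
          have "iter_deriv (fst p) (\<lambda>x. c (0 + inverse R *\<^sub>R x)) y = (inverse R ^ length (fst p)) *\<^sub>R iter_deriv (fst p) c (0 + inverse R *\<^sub>R y)"
            by (simp only: iter_deriv_scale[OF sc pb(1)[OF p]])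
          then show ?thesis using z0 by simp
        qed
        have "iter_deriv vs (fR R) y = 0"
          unfolding eq
        proof (rule sum_list_zero')
          fix p assume p: "p \<in> set (leib vs)"
          show "iter_deriv (fst p) (\<lambda>x. c (0 + inverse R *\<^sub>R x)) y * iter_deriv (snd p) f y = 0"
            using z[OF p] by (simp only: mult_zero_left)
        qed
        then show ?thesis using Kf0 R by simp
      next
        case False
        then have yR: "R \<le> norm y" by simp
        have "norm (iter_deriv vs (fR R) y) \<le> (\<Sum>p\<leftarrow>leib vs. norm (iter_deriv (fst p) (\<lambda>x. c (0 + inverse R *\<^sub>R x)) y * iter_deriv (snd p) f y))"
          unfolding eq by (rule norm_sum_list_le)
        also have "\<dots> \<le> (\<Sum>p\<leftarrow>leib vs. bsmooth_bound c (fst p) * norm (iter_deriv (snd p) f y))"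
        proof (rule sum_list_mono')
          fix p assume p: "p \<in> set (leib vs)"
          have "norm (iter_deriv (fst p) (\<lambda>x. c (0 + inverse R *\<^sub>R x)) y) \<le> bsmooth_bound c (fst p)"
            by (intro bsmooth_scale_bound[OF b2[folded c_def] invR[OF R] pb(1)[OF p]])
          then show "norm (iter_deriv (fst p) (\<lambda>x. c (0 + inverse R *\<^sub>R x)) y * iter_deriv (snd p) f y) \<le> bsmooth_bound c (fst p) * norm (iter_deriv (snd p) f y)"
            by (simp add: norm_mult mult_right_mono)
        qed
        finally have "(1 + norm y) ^ n * norm (iter_deriv vs (fR R) y) \<le> (1 + norm y) ^ n * (\<Sum>p\<leftarrow>leib vs. bsmooth_bound c (fst p) * norm (iter_deriv (snd p) f y))"
          by (intro mult_left_mono) auto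
        also have "\<dots> = (\<Sum>p\<leftarrow>leib vs. bsmooth_bound c (fst p) * ((1 + norm y) ^ n * norm (iter_deriv (snd p) f y)))"
          unfolding sum_list_mult_distrib by (simp add: mult.left_commute)
        also have "\<dots> \<le> (\<Sum>p\<leftarrow>leib vs. bsmooth_bound c (fst p) * (schwartz_seminorm (Suc n) (snd p) f / (1 + R)))"
        proof (rule sum_list_mono')
          fix p assume p: "p \<in> set (leib vs)"
          show "bsmooth_bound c (fst p) * ((1 + norm y) ^ n * norm (iter_deriv (snd p) f y)) \<le> bsmooth_bound c (fst p) * (schwartz_seminorm (Suc n) (snd p) f / (1 + R))"
            using R by (intro mult_left_mono weight_div[OF f pb(2)[OF p] yR] bsmooth_bound_nonneg[OF b2[folded c_def] pb(1)[OF p]]) simp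
        qed
        also have "\<dots> = Kf / (1 + R)"
          unfolding Kf_def by (rule sum_list_div)
        finally show ?thesis .
      qed
    qed
    have ev: "eventually (\<lambda>R. norm (schwartz_seminorm n vs (fR R)) \<le> Kf / (1 + R)) at_top"
      using eventually_ge_at_top[of "1::real"]
    proof (rule eventually_mono)
      fix R :: real assume R: "1 \<le> R"
      have "schwartz_seminorm n vs (fR R) \<le> Kf / (1 + R)" by (rule sn_least) (rule pw[OF R])
      moreover have "0 \<le> schwartz_seminorm n vs (fR R)" by (rule sn_nonneg[OF sfR[OF R] vs])
      ultimately show "norm (schwartz_seminorm n vs (fR R)) \<le> Kf / (1 + R)" by simp
    qed
    have "((\<lambda>R::real. Kf / (1 + R)) \<longlongrightarrow> 0) at_top"
      by (intro tendsto_divide_0[OF tendsto_const] filterlim_at_top_imp_at_infinity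
          filterlim_tendsto_add_at_top[OF tendsto_const filterlim_ident])
    then show "((\<lambda>R. schwartz_seminorm n vs (fR R)) \<longlongrightarrow> 0) at_top"
      by (rule Lim_null_comparison[OF ev])
  qed
  have "eventually (\<lambda>R. T (fR R) = T f) at_top"
    using eventually_ge_at_top[of "1::real"] by (rule eventually_mono) (rule TfR)
  then have "((\<lambda>R::real. T f) \<longlongrightarrow> 0) at_top"
    using lim by (rule Lim_transform_eventually[rotated])
  then show ?thesis by (simp add: tendsto_const_iff)
qed

lemma localize:
  assumes T: "tempered T" and K: "compactly_supported T"
  obtains ch R0 where "bsmooth ch" "\<And>vs y. norm y > R0 \<Longrightarrow> iter_deriv vs ch y = 0"
    "\<And>g. schwartz g \<Longrightarrow> T g = T (\<lambda>y. ch y * g y)"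
proof -
  have cK: "compact (dist_support T)" using K by (simp add: compactly_supported_def)
  obtain \<beta> W C where \<beta>: "\<beta> \<in> SM" "open W" "dist_support T \<subseteq> W" "\<forall>x\<in>W. \<beta> x = 1"
    "compact C" "\<forall>x. x \<notin> C \<longrightarrow> \<beta> x = 0"
    using bump_ex[OF cK, of UNIV] by auto
  have b1: "bsmooth (\<lambda>x. complex_of_real (\<beta> x))" and b2: "bsmooth (\<lambda>x. 1 - complex_of_real (\<beta> x))"
    using cb_bsmooth[OF \<beta>(1,5)] \<beta>(6) by auto
  obtain R0 where R0: "\<And>x. x \<in> C \<Longrightarrow> norm x \<le> R0"
    using compact_imp_bounded[OF \<beta>(5)] bounded_iff by blast
  have vanish: "iter_deriv vs (\<lambda>x. complex_of_real (\<beta> x)) y = 0" if y: "norm y > R0" for vs y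
  proof -
    have "iter_deriv vs (\<lambda>x. complex_of_real (\<beta> x)) y = iter_deriv vs (\<lambda>x. 0) y"
    proof (rule iter_deriv_local[of "{x. norm x > R0}"])
      show "open {x::'a. norm x > R0}" by (intro open_Collect_less continuous_intros)
      show "y \<in> {x. norm x > R0}" using y by simp
      fix x assume "x \<in> {x::'a. norm x > R0}"
      then have "x \<notin> C" using R0 by force
      then show "complex_of_real (\<beta> x) = 0" using \<beta>(6) by simp
    qed
    then show ?thesis by (simp add: iter_deriv_zero)
  qed
  have loc: "T g = T (\<lambda>y. complex_of_real (\<beta> y) * g y)" if g: "schwartz g" for g
  proof -
    have s1: "schwartz (\<lambda>y. complex_of_real (\<beta> y) * g y)" by (rule schwartz_mult[OF b1 g])
    have s2: "schwartz (\<lambda>y. (1 - complex_of_real (\<beta> y)) * g y)" by (rule schwartz_mult[OF b2 g])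
    have z: "T (\<lambda>y. (1 - complex_of_real (\<beta> y)) * g y) = 0"
      by (rule vanish_near[OF T cK s2 \<beta>(2,3)]) (use \<beta>(4) in simp)
    have "g = (\<lambda>y. complex_of_real (\<beta> y) * g y + (1 - complex_of_real (\<beta> y)) * g y)"
      by (auto simp: algebra_simps)
    then have "T g = T (\<lambda>y. complex_of_real (\<beta> y) * g y) + T (\<lambda>y. (1 - complex_of_real (\<beta> y)) * g y)"
      using tempered_add[OF T s1 s2] by metis
    then show ?thesis using z by simp
  qed
  show ?thesis by (rule that[OF b1 vanish loc])
qed



lemma SNS_iter:
  fixes g :: "'a::euclidean_space \<Rightarrow> complex"
  assumes g: "schwartz g" and ws: "set ws \<subseteq> Basis"
  shows "SNS M (iter_deriv ws g) \<le> real (card (IDX M :: (nat \<times> 'a list) set)) * SNS (M + length ws) g"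
proof -
  have "SNS M (iter_deriv ws g) = (\<Sum>p\<in>(IDX M :: (nat \<times> 'a list) set). schwartz_seminorm (fst p) (snd p @ ws) g)"
    unfolding SNS_def schwartz_seminorm_def
    by (simp add: case_prod_beta iter_deriv_append[symmetric])
  also have "\<dots> \<le> (\<Sum>p\<in>(IDX M :: (nat \<times> 'a list) set). SNS (M + length ws) g)"
  proof (rule sum_mono)
    fix p assume p: "p \<in> (IDX M :: (nat \<times> 'a list) set)"
    then have "set (snd p @ ws) \<subseteq> Basis" "fst p \<le> M + length ws" "length (snd p @ ws) \<le> M + length ws"
      using ws by (auto simp: IDX_def)
    then show "schwartz_seminorm (fst p) (snd p @ ws) g \<le> SNS (M + length ws) g"
      by (simp add: sn_le_SNS[OF g])
  qed
  finally show ?thesis by simp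
qed


lemma leib_length': "(a, b) \<in> set (leib vs) \<Longrightarrow> length b \<le> length vs"
proof (induction vs arbitrary: a b)
  case Nil
  then show ?case by simp
next
  case (Cons v vs)
  then obtain a' b' where ab: "(a', b') \<in> set (leib vs)" and
     "(a, b) = (v # a', b') \<or> (a, b) = (a', v # b')" by auto
  with Cons.IH[OF ab] show ?case by auto
qed

lemma leib_length: "p \<in> set (leib vs) \<Longrightarrow> length (snd p) \<le> length vs"
  using leib_length'[of "fst p" "snd p" vs] by simp

lemma sum_list_mult_right: "(\<Sum>p\<leftarrow>L. F p * (c * d)) = (\<Sum>p\<leftarrow>L. F p * c) * (d::real)"
  by (induction L) (simp_all add: algebra_simps)

lemma decay_point:
  fixes ch h :: "'a::euclidean_space \<Rightarrow> complex"
  assumes ch: "bsmooth ch" and h: "schwartz h" and s: "\<bar>s\<bar> = 1" and us: "set us \<subseteq> Basis"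
    and R: "R \<ge> 0" and y: "norm y \<le> R" and nN: "n \<le> M" and uN: "length us \<le> M"
  shows "(1 + norm x) ^ n * ((1 + norm y) ^ m * norm (iter_deriv us (\<lambda>y. ch y * h (x + s *\<^sub>R y)) y))
     \<le> (\<Sum>p\<leftarrow>leib us. bsmooth_bound ch (fst p) * (1 + R) ^ (m + n)) * SNS M h"
proof -
  define A where "A = (1 + norm x) ^ n * (1 + norm y) ^ m"
  have A0: "A \<ge> 0" unfolding A_def by simp
  have shx: "smooth_fun (\<lambda>y. h (x + s *\<^sub>R y))" by (rule smooth_scale[OF schwartz_smooth[OF h]])
  have sch: "smooth_fun ch" using ch by (simp add: bsmooth_def)
  have pb: "set (fst p) \<subseteq> Basis" "set (snd p) \<subseteq> Basis" "length (snd p) \<le> M" if "p \<in> set (leib us)" for p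
  proof -
    show "set (fst p) \<subseteq> Basis" "set (snd p) \<subseteq> Basis" using leib_set[OF that] us by auto
    have "length (snd p) \<le> length us" by (rule leib_length[OF that])
    then show "length (snd p) \<le> M" using uN by simp
  qed
  have "(1 + norm x) ^ n * ((1 + norm y) ^ m * norm (iter_deriv us (\<lambda>y. ch y * h (x + s *\<^sub>R y)) y))
        = A * norm (\<Sum>p\<leftarrow>leib us. iter_deriv (fst p) ch y * iter_deriv (snd p) (\<lambda>y. h (x + s *\<^sub>R y)) y)"
    unfolding A_def iter_deriv_mult[OF sch shx us] by (simp add: mult.assoc)
  also have "\<dots> \<le> A * (\<Sum>p\<leftarrow>leib us. norm (iter_deriv (fst p) ch y * iter_deriv (snd p) (\<lambda>y. h (x + s *\<^sub>R y)) y))"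
    by (intro mult_left_mono norm_sum_list_le A0)
  also have "\<dots> = (\<Sum>p\<leftarrow>leib us. norm (iter_deriv (fst p) ch y) * (A * norm (iter_deriv (snd p) h (x + s *\<^sub>R y))))"
  proof -
    have "norm (iter_deriv (snd p) (\<lambda>y. h (x + s *\<^sub>R y)) y) = norm (iter_deriv (snd p) h (x + s *\<^sub>R y))"
      if "p \<in> set (leib us)" for p
      using s by (simp add: iter_deriv_scale[OF schwartz_smooth[OF h] pb(2)[OF that]] power_abs)
    then have "(\<Sum>p\<leftarrow>leib us. norm (iter_deriv (fst p) ch y * iter_deriv (snd p) (\<lambda>y. h (x + s *\<^sub>R y)) y))
        = (\<Sum>p\<leftarrow>leib us. norm (iter_deriv (fst p) ch y) * norm (iter_deriv (snd p) h (x + s *\<^sub>R y)))"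
      by (intro arg_cong[of _ _ sum_list] map_cong) (auto simp: norm_mult)
    then have "A * (\<Sum>p\<leftarrow>leib us. norm (iter_deriv (fst p) ch y * iter_deriv (snd p) (\<lambda>y. h (x + s *\<^sub>R y)) y))
        = A * (\<Sum>p\<leftarrow>leib us. norm (iter_deriv (fst p) ch y) * norm (iter_deriv (snd p) h (x + s *\<^sub>R y)))" by simp
    also have "\<dots> = (\<Sum>p\<leftarrow>leib us. A * (norm (iter_deriv (fst p) ch y) * norm (iter_deriv (snd p) h (x + s *\<^sub>R y))))"
      by (rule sum_list_mult_distrib)
    also have "\<dots> = (\<Sum>p\<leftarrow>leib us. norm (iter_deriv (fst p) ch y) * (A * norm (iter_deriv (snd p) h (x + s *\<^sub>R y))))"
      by (simp add: mult.left_commute)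
    finally show ?thesis .
  qed
  also have "\<dots> \<le> (\<Sum>p\<leftarrow>leib us. bsmooth_bound ch (fst p) * ((1 + R) ^ (m + n) * SNS M h))"
  proof (rule sum_list_mono')
    fix p assume p: "p \<in> set (leib us)"
    have w1: "(1 + norm x) ^ n \<le> (1 + norm (s *\<^sub>R y + x)) ^ n * (1 + norm (s *\<^sub>R y)) ^ n"
      by (rule weight_shift_pow)
    have ny: "norm (s *\<^sub>R y) = norm y" using s by simp
    have "A * norm (iter_deriv (snd p) h (x + s *\<^sub>R y)) \<le>
        ((1 + norm (x + s *\<^sub>R y)) ^ n * (1 + R) ^ n * (1 + R) ^ m) * norm (iter_deriv (snd p) h (x + s *\<^sub>R y))"
    proof (intro mult_right_mono)
      have "(1 + norm x) ^ n \<le> (1 + norm (x + s *\<^sub>R y)) ^ n * (1 + R) ^ n"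
      proof -
        have "(1 + norm (s *\<^sub>R y)) ^ n \<le> (1 + R) ^ n" using ny y by (intro power_mono) auto
        then have "(1 + norm (s *\<^sub>R y + x)) ^ n * (1 + norm (s *\<^sub>R y)) ^ n \<le> (1 + norm (s *\<^sub>R y + x)) ^ n * (1 + R) ^ n"
          by (intro mult_left_mono) auto
        then show ?thesis using w1 by (simp add: add.commute)
      qed
      moreover have "(1 + norm y) ^ m \<le> (1 + R) ^ m" using y by (intro power_mono) auto
      ultimately show "A \<le> (1 + norm (x + s *\<^sub>R y)) ^ n * (1 + R) ^ n * (1 + R) ^ m"
        unfolding A_def using R by (intro mult_mono) auto
    qed simp
    also have "\<dots> = (1 + R) ^ (m + n) * ((1 + norm (x + s *\<^sub>R y)) ^ n * norm (iter_deriv (snd p) h (x + s *\<^sub>R y)))"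
      by (simp add: power_add algebra_simps)
    also have "\<dots> \<le> (1 + R) ^ (m + n) * SNS M h"
      using R by (intro mult_left_mono order_trans[OF sn_le[OF h pb(2)[OF p]] sn_le_SNS[OF h pb(2)[OF p] nN pb(3)[OF p]]]) auto
    finally have AA: "A * norm (iter_deriv (snd p) h (x + s *\<^sub>R y)) \<le> (1 + R) ^ (m + n) * SNS M h" .
    show "norm (iter_deriv (fst p) ch y) * (A * norm (iter_deriv (snd p) h (x + s *\<^sub>R y))) \<le> bsmooth_bound ch (fst p) * ((1 + R) ^ (m + n) * SNS M h)"
      by (rule mult_mono[OF bsmooth_bound[OF ch pb(1)[OF p]] AA bsmooth_bound_nonneg[OF ch pb(1)[OF p]]])
         (intro mult_nonneg_nonneg A0 norm_ge_zero)
  qed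
  also have "\<dots> = (\<Sum>p\<leftarrow>leib us. bsmooth_bound ch (fst p) * (1 + R) ^ (m + n)) * SNS M h"
    by (rule sum_list_mult_right)
  finally show ?thesis .
qed



lemma localize_ex:
  assumes T: "tempered T" and K: "compactly_supported T"
  shows "\<exists>ch R0. bsmooth ch \<and> (\<forall>vs y. norm y > R0 \<longrightarrow> iter_deriv vs ch y = 0) \<and>
     (\<forall>g. schwartz g \<longrightarrow> T g = T (\<lambda>y. ch y * g y))"
  by (rule localize[OF T K], blast)

lemma IDX_mem: "q \<in> IDX N \<Longrightarrow> set (snd q) \<subseteq> Basis \<and> length (snd q) \<le> N \<and> fst q \<le> N"
  by (cases q) (auto simp: IDX_def)

lemma SNS_expand: "SNS N F = (\<Sum>q\<in>IDX N. schwartz_seminorm (fst q) (snd q) F)"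
  unfolding SNS_def by (simp add: case_prod_beta)

lemma decay:
  fixes T :: "('a::euclidean_space \<Rightarrow> complex) \<Rightarrow> complex"
  assumes T: "tempered T" and K: "compactly_supported T"
  shows "\<exists>Kc M. Kc \<ge> 0 \<and> (\<forall>h x s. schwartz h \<longrightarrow> \<bar>s\<bar> = 1 \<longrightarrow>
            (1 + norm x) ^ n * norm (T (\<lambda>y. h (x + s *\<^sub>R y))) \<le> Kc * SNS M h)"
proof -
  obtain ch R0 where ch: "bsmooth ch" "\<forall>vs y. norm y > R0 \<longrightarrow> iter_deriv vs ch y = 0"
    "\<forall>g. schwartz g \<longrightarrow> T g = T (\<lambda>y. ch y * g y)"
    using localize_ex[OF T K] by blast
  obtain C N where C: "C \<ge> 0" and CN: "\<And>f. schwartz f \<Longrightarrow> norm (T f) \<le> C * SNS N f"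
    using tempered_bound[OF T] by blast
  define R where "R = max R0 0"
  define M where "M = max n N"
  define L where "L = (\<lambda>q::nat \<times> 'a list. \<Sum>p\<leftarrow>leib (snd q). bsmooth_bound ch (fst p) * (1 + R) ^ (fst q + n))"
  define Kc where "Kc = C * (\<Sum>q\<in>IDX N. L q)"
  have R0: "R \<ge> 0" unfolding R_def by simp
  have L0: "L q \<ge> 0" if q: "q \<in> IDX N" for q
  proof -
    have "(\<Sum>p\<leftarrow>leib (snd q). (0::real)) \<le> L q" unfolding L_def
    proof (rule sum_list_mono')
      fix p assume p: "p \<in> set (leib (snd q))"
      have "set (snd q) \<subseteq> Basis" using IDX_mem[OF q] by blast
      then have "set (fst p) \<subseteq> Basis" using leib_set[OF p] by blast
      then show "0 \<le> bsmooth_bound ch (fst p) * (1 + R) ^ (fst q + n)"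
        using R0 by (intro mult_nonneg_nonneg bsmooth_bound_nonneg[OF ch(1)]) auto
    qed
    then show ?thesis by simp
  qed
  have Kc0: "Kc \<ge> 0" unfolding Kc_def using C L0 by (intro mult_nonneg_nonneg sum_nonneg) auto
  have main: "(1 + norm x) ^ n * norm (T (\<lambda>y. h (x + s *\<^sub>R y))) \<le> Kc * SNS M h"
    if h: "schwartz h" and s: "\<bar>s\<bar> = 1" for h x s
  proof -
    define hx where "hx = (\<lambda>y. h (x + s *\<^sub>R y))"
    have shx: "schwartz hx" unfolding hx_def by (rule schwartz_affine[OF h s])
    have sF: "schwartz (\<lambda>y. ch y * hx y)" by (rule schwartz_mult[OF ch(1) shx])
    have W0: "(1 + norm x) ^ n > 0" by (intro zero_less_power) (smt (verit) norm_ge_zero)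
    have SNS0: "SNS M h \<ge> 0" by (rule SNS_nonneg[OF h])
    have qb: "(1 + norm x) ^ n * schwartz_seminorm (fst q) (snd q) (\<lambda>y. ch y * hx y) \<le> L q * SNS M h"
      if q: "q \<in> IDX N" for q
    proof -
      have us: "set (snd q) \<subseteq> Basis" "length (snd q) \<le> M" "n \<le> M" using IDX_mem[OF q] by (auto simp: M_def)
      have "schwartz_seminorm (fst q) (snd q) (\<lambda>y. ch y * hx y) \<le> L q * SNS M h / (1 + norm x) ^ n"
      proof (rule sn_least)
        fix y
        show "(1 + norm y) ^ fst q * norm (iter_deriv (snd q) (\<lambda>y. ch y * hx y) y) \<le> L q * SNS M h / (1 + norm x) ^ n"
        proof (cases "norm y \<le> R")
          case True
          have "(1 + norm x) ^ n * ((1 + norm y) ^ fst q * norm (iter_deriv (snd q) (\<lambda>y. ch y * hx y) y)) \<le> L q * SNS M h"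
            unfolding hx_def L_def by (rule decay_point[OF ch(1) h s us(1) R0 True us(3) us(2)])
          then show ?thesis using W0 by (simp add: field_simps)
        next
          case False
          have sch: "smooth_fun ch" using ch(1) by (simp add: bsmooth_def)
          have "iter_deriv (snd q) (\<lambda>y. ch y * hx y) y = 0"
            unfolding iter_deriv_mult[OF sch schwartz_smooth[OF shx] us(1)]
            by (rule sum_list_zero') (use False ch(2) in \<open>auto simp: R_def\<close>)
          then show ?thesis using L0[OF q] SNS0 W0 by simp
        qed
      qed
      then show ?thesis using W0 by (simp add: field_simps)
    qed
    have "(1 + norm x) ^ n * norm (T hx) = (1 + norm x) ^ n * norm (T (\<lambda>y. ch y * hx y))"
      using ch(3) shx by simp
    also have "\<dots> \<le> (1 + norm x) ^ n * (C * SNS N (\<lambda>y. ch y * hx y))"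
      by (intro mult_left_mono CN sF) simp
    also have "\<dots> = C * (\<Sum>q\<in>IDX N. (1 + norm x) ^ n * schwartz_seminorm (fst q) (snd q) (\<lambda>y. ch y * hx y))"
      by (simp add: SNS_expand sum_distrib_left mult.left_commute)
    also have "\<dots> \<le> C * (\<Sum>q\<in>IDX N. L q * SNS M h)"
      by (intro mult_left_mono sum_mono qb C)
    also have "\<dots> = Kc * SNS M h" by (simp add: Kc_def sum_distrib_right)
    finally show ?thesis by (simp add: hx_def)
  qed
  show ?thesis using Kc0 main by blast
qed



lemma Fs_schwartz:
  assumes T: "tempered T" and K: "compactly_supported T" and g: "schwartz g" and s: "\<bar>s\<bar> = 1"
  shows "schwartz (Fs T s g)"
  unfolding schwartz_def
proof (intro conjI allI impI)
  show "smooth_fun (Fs T s g)" by (rule Fs_smooth[OF T g s])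
  fix vs :: "'a list" and n :: nat assume vs: "set vs \<subseteq> Basis"
  obtain Kc M where KM: "\<forall>h x s. schwartz h \<longrightarrow> \<bar>s\<bar> = 1 \<longrightarrow>
            (1 + norm x) ^ n * norm (T (\<lambda>y. h (x + s *\<^sub>R y))) \<le> Kc * SNS M h"
    using decay[OF T K, of n] by blast
  show "\<exists>C. \<forall>x. (1 + norm x) ^ n * norm (iter_deriv vs (Fs T s g) x) \<le> C"
  proof (intro exI allI)
    fix x
    show "(1 + norm x) ^ n * norm (iter_deriv vs (Fs T s g) x) \<le> Kc * SNS M (iter_deriv vs g)"
      unfolding Fs_iter[OF T g s vs] Fs_def using KM schwartz_iter[OF g vs] s by blast
  qed
qed

lemma Fs_sn_bound:
  fixes T :: "('a::euclidean_space \<Rightarrow> complex) \<Rightarrow> complex"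
  assumes T: "tempered T" and K: "compactly_supported T" and s: "\<bar>s\<bar> = 1" and ws: "set ws \<subseteq> Basis"
  shows "\<exists>K M. K \<ge> 0 \<and> (\<forall>g. schwartz g \<longrightarrow> schwartz_seminorm n ws (Fs T s g) \<le> K * SNS M g)"
proof -
  obtain Kc M where Kc: "Kc \<ge> 0" and KM: "\<forall>h x s. schwartz h \<longrightarrow> \<bar>s\<bar> = 1 \<longrightarrow>
            (1 + norm x) ^ n * norm (T (\<lambda>y. h (x + s *\<^sub>R y))) \<le> Kc * SNS M h"
    using decay[OF T K, of n] by blast
  have "schwartz_seminorm n ws (Fs T s g) \<le> (Kc * real (card (IDX M :: (nat \<times> 'a list) set))) * SNS (M + length ws) g"
    if g: "schwartz g" for g
  proof -
    have "schwartz_seminorm n ws (Fs T s g) \<le> Kc * SNS M (iter_deriv ws g)"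
    proof (rule sn_least)
      fix x
      show "(1 + norm x) ^ n * norm (iter_deriv ws (Fs T s g) x) \<le> Kc * SNS M (iter_deriv ws g)"
        unfolding Fs_iter[OF T g s ws] Fs_def using KM schwartz_iter[OF g ws] s by blast
    qed
    also have "\<dots> \<le> Kc * (real (card (IDX M :: (nat \<times> 'a list) set)) * SNS (M + length ws) g)"
      by (intro mult_left_mono SNS_iter[OF g ws] Kc)
    finally show ?thesis by simp
  qed
  then show ?thesis using Kc by (intro exI[of _ "Kc * real (card (IDX M :: (nat \<times> 'a list) set))"] exI[of _ "M + length ws"]) auto
qed

lemma Fs_add:
  assumes T: "tempered T" and f: "schwartz f" and g: "schwartz g" and s: "\<bar>s\<bar> = 1"
  shows "Fs T s (\<lambda>x. f x + g x) = (\<lambda>x. Fs T s f x + Fs T s g x)"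
  unfolding Fs_def by (rule ext, rule tempered_add[OF T schwartz_affine[OF f s] schwartz_affine[OF g s]])

lemma Fs_cmult:
  assumes T: "tempered T" and f: "schwartz f" and s: "\<bar>s\<bar> = 1"
  shows "Fs T s (\<lambda>x. c * f x) = (\<lambda>x. c * Fs T s f x)"
  unfolding Fs_def by (rule ext, rule tempered_cmult[OF T schwartz_affine[OF f s]])

lemma dconv_Fs: "dconv \<psi> \<phi> f = \<psi> (Fs \<phi> 1 f)"
proof -
  have "Fs \<phi> 1 f = (\<lambda>x. \<phi> (\<lambda>y. f (x + y)))" by (rule ext) (simp add: Fs_def)
  then show ?thesis by (simp add: dconv_def)
qed

lemma tempered_dconv:
  fixes \<psi> \<phi> :: "('a::euclidean_space \<Rightarrow> complex) \<Rightarrow> complex"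
  assumes psi: "tempered \<psi>" and phi: "tempered \<phi>" and K: "compactly_supported \<phi>"
  shows "tempered (dconv \<psi> \<phi>)"
proof -
  have one: "\<bar>1::real\<bar> = 1" by simp
  have sF: "schwartz (Fs \<phi> 1 f)" if "schwartz f" for f by (rule Fs_schwartz[OF phi K that one])
  obtain C N where C: "C \<ge> 0" and CN: "\<And>f. schwartz f \<Longrightarrow> norm (\<psi> f) \<le> C * SNS N f"
    using tempered_bound[OF psi] by blast
  have "\<forall>q\<in>(IDX N :: (nat \<times> 'a list) set). \<exists>KM. fst KM \<ge> 0 \<and> (\<forall>g. schwartz g \<longrightarrow> schwartz_seminorm (fst q) (snd q) (Fs \<phi> 1 g) \<le> fst KM * SNS (snd KM) g)"
  proof
    fix q assume q: "q \<in> (IDX N :: (nat \<times> 'a list) set)"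
    have ws: "set (snd q) \<subseteq> Basis" using IDX_mem[OF q] by blast
    show "\<exists>KM. fst KM \<ge> 0 \<and> (\<forall>g. schwartz g \<longrightarrow> schwartz_seminorm (fst q) (snd q) (Fs \<phi> 1 g) \<le> fst KM * SNS (snd KM) g)"
      using Fs_sn_bound[OF phi K one ws, of "fst q"] by auto
  qed
  then obtain KM where KM: "\<And>q. q \<in> (IDX N :: (nat \<times> 'a list) set) \<Longrightarrow> fst (KM q) \<ge> 0 \<and> (\<forall>g. schwartz g \<longrightarrow> schwartz_seminorm (fst q) (snd q) (Fs \<phi> 1 g) \<le> fst (KM q) * SNS (snd (KM q)) g)"
    by metis
  define Mx where "Mx = (\<Sum>q\<in>(IDX N :: (nat \<times> 'a list) set). snd (KM q))"
  have Mx: "snd (KM q) \<le> Mx" if "q \<in> (IDX N :: (nat \<times> 'a list) set)" for q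
    unfolding Mx_def by (rule member_le_sum[OF that _ finite_IDX]) simp
  define D where "D = C * (\<Sum>q\<in>(IDX N :: (nat \<times> 'a list) set). fst (KM q))"
  have bnd: "norm (dconv \<psi> \<phi> f) \<le> D * SNS Mx f" if f: "schwartz f" for f
  proof -
    have "norm (dconv \<psi> \<phi> f) \<le> C * SNS N (Fs \<phi> 1 f)" unfolding dconv_Fs by (rule CN[OF sF[OF f]])
    also have "\<dots> = C * (\<Sum>q\<in>(IDX N :: (nat \<times> 'a list) set). schwartz_seminorm (fst q) (snd q) (Fs \<phi> 1 f))"
      by (simp add: SNS_expand)
    also have "\<dots> \<le> C * (\<Sum>q\<in>(IDX N :: (nat \<times> 'a list) set). fst (KM q) * SNS Mx f)"
    proof (intro mult_left_mono C sum_mono)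
      fix q assume q: "q \<in> (IDX N :: (nat \<times> 'a list) set)"
      have "schwartz_seminorm (fst q) (snd q) (Fs \<phi> 1 f) \<le> fst (KM q) * SNS (snd (KM q)) f"
        using KM[OF q] f by blast
      also have "\<dots> \<le> fst (KM q) * SNS Mx f"
        using KM[OF q] by (intro mult_left_mono SNS_mono[OF f Mx[OF q]]) blast
      finally show "schwartz_seminorm (fst q) (snd q) (Fs \<phi> 1 f) \<le> fst (KM q) * SNS Mx f" .
    qed
    also have "\<dots> = D * SNS Mx f" by (simp add: D_def sum_distrib_right)
    finally show ?thesis .
  qed
  show ?thesis
    unfolding tempered_def
  proof (intro conjI allI impI)
    fix f g :: "'a \<Rightarrow> complex" assume f: "schwartz f" and g: "schwartz g"
    show "dconv \<psi> \<phi> (\<lambda>x. f x + g x) = dconv \<psi> \<phi> f + dconv \<psi> \<phi> g"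
      unfolding dconv_Fs Fs_add[OF phi f g one] by (rule tempered_add[OF psi sF[OF f] sF[OF g]])
  next
    fix f :: "'a \<Rightarrow> complex" and c assume f: "schwartz f"
    show "dconv \<psi> \<phi> (\<lambda>x. c * f x) = c * dconv \<psi> \<phi> f"
      unfolding dconv_Fs Fs_cmult[OF phi f one] by (rule tempered_cmult[OF psi sF[OF f]])
  next
    show "\<exists>C N. \<forall>f. schwartz f \<longrightarrow> norm (dconv \<psi> \<phi> f) \<le> C * (\<Sum>(n, vs)\<in>{..N} \<times> {vs. set vs \<subseteq> Basis \<and> length vs \<le> N}. schwartz_seminorm n vs f)"
      using bnd unfolding SNS_def IDX_def by blast
  qed
qed

lemma dconv_fun_dconv: "dconv_fun (dconv \<psi> \<phi>) f = dconv_fun \<psi> (Fs \<phi> (-1) f)"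
proof
  fix t
  have "(\<lambda>x. \<phi> (\<lambda>y. f (- (x + y - t)))) = (\<lambda>x. \<phi> (\<lambda>y. f (- (x - t) + (-1) *\<^sub>R y)))"
    by (simp add: algebra_simps)
  then show "dconv_fun (dconv \<psi> \<phi>) f t = dconv_fun \<psi> (Fs \<phi> (-1) f) t"
    by (simp add: dconv_fun_def dconv_def Fs_def)
qed

theorem proposition5p9:
  fixes \<psi> \<phi> :: "('a::euclidean_space \<Rightarrow> complex) \<Rightarrow> complex"
  assumes "tempered \<psi>" and "tempered \<phi>" and "compactly_supported \<phi>"
  shows "(weakly_ap_dist \<psi> \<longrightarrow> weakly_ap_dist (dconv \<psi> \<phi>)) \<and>
         (strongly_ap_dist \<psi> \<longrightarrow> strongly_ap_dist (dconv \<psi> \<phi>)) \<and>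
         (null_weakly_ap_dist \<psi> \<longrightarrow> null_weakly_ap_dist (dconv \<psi> \<phi>))"
proof -
  have tc: "tempered (dconv \<psi> \<phi>)" by (rule tempered_dconv[OF assms])
  have m1: "\<bar>-1::real\<bar> = 1" by simp
  have sF: "schwartz (Fs \<phi> (-1) f)" if "schwartz f" for f by (rule Fs_schwartz[OF assms(2,3) that m1])
  show ?thesis
    unfolding weakly_ap_dist_def strongly_ap_dist_def null_weakly_ap_dist_def dconv_fun_dconv
    using tc sF by blast
qed


end
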